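(* Let $T=(V,E)$ be a tree with $n$ vertices $V=\{v_1,\dots,v_n\}$, rooted at $v_1$, and let $Y$ be its set of leaves. Each edge $e\in E$ carries an original length $w(e)$ and an upgraded length $u(e)$ with $w(e)\le u(e)$, and let $K$ be a given nonnegative integer. The maximum shortest path interdiction problem by upgrading nodes on trees under unit cost, $$\max_{S\subseteq V,\ |S|\le K}\ \min_{t\in Y}\bar w(P_{v_1,t}),\qquad \bar w(e)=\begin{cases}u(e), & e\in A(v)\text{ for some } v\in S,\\ w(e), & \text{otherwise},\end{cases}$$ can be solved (i.e., an optimal set $S$, the corresponding length vector $\bar w$, and the optimal value are computed) in $O(n^3)$ time by a dynamic programming algorithm.
   Context: For a vertex $v_i$, $A(v_i)=\{(v_i,v_j)\in E : v_j \text{ is a child of } v_i\}$ is the set of edges from $v_i$ to its children; "upgrading" a vertex $v$ replaces the length of every edge in $A(v)$ by its upgraded length $u(e)$. For a leaf $t\in Y$, $P_{v_1,t}$ denotes the unique path in $T$ from the root $v_1$ to $t$, and $\bar w(P_{v_1,t})=\sum_{e\in P_{v_1,t}}\bar w(e)$. Each vertex has unit upgrade cost, so the budget constraint is $|S|\le K$. *)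

theory Defs
  imports Complex_Main "HOL-Library.Time_Functions"
begin

text \<open>A rooted tree with n vertices 0,...,n-1 (vertex i stands for v_(i+1)), rooted at 0, is
given by a parent list ps of length n: for 0 < i < n the parent of i is ps!i, with ps!i < i
(every rooted tree admits such a labelling, e.g. by BFS order); ps!0 is ignored.
The edge (ps!i, i) carries original length ws!i and upgraded length us!i.\<close>

definition tree_input :: "nat list \<Rightarrow> real list \<Rightarrow> real list \<Rightarrow> bool" where
  "tree_input ps ws us \<longleftrightarrow> length ps \<ge> 1 \<and> length ws = length ps \<and> length us = length ps
     \<and> (\<forall>i. 0 < i \<and> i < length ps \<longrightarrow> ps ! i < i)
     \<and> (\<forall>i. 0 < i \<and> i < length ps \<longrightarrow> ws ! i \<le> us ! i)"

definition tV :: "nat list \<Rightarrow> nat set" where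
  "tV ps = {0..<length ps}"

definition tE :: "nat list \<Rightarrow> (nat \<times> nat) set" where
  "tE ps = {(ps ! i, i) | i. 0 < i \<and> i < length ps}"

definition tA :: "nat list \<Rightarrow> nat \<Rightarrow> (nat \<times> nat) set" where
  "tA ps v = {e \<in> tE ps. fst e = v}"

definition leaves :: "nat list \<Rightarrow> nat set" where
  "leaves ps = {t \<in> tV ps. tA ps t = {}}"

definition w_len :: "real list \<Rightarrow> nat \<times> nat \<Rightarrow> real" where
  "w_len ws e = ws ! snd e"

definition wbar :: "nat list \<Rightarrow> real list \<Rightarrow> real list \<Rightarrow> nat set \<Rightarrow> nat \<times> nat \<Rightarrow> real" where
  "wbar ps ws us S e = (if \<exists>v\<in>S. e \<in> tA ps v then w_len us e else w_len ws e)"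

text \<open>Edges of the path from the root 0 to t: the edges (ps!i, i) with i a non-root
ancestor-or-self of t.\<close>
definition parent :: "nat list \<Rightarrow> nat \<Rightarrow> nat" where
  "parent ps j = (if j = 0 then 0 else ps ! j)"

definition path_edges :: "nat list \<Rightarrow> nat \<Rightarrow> (nat \<times> nat) set" where
  "path_edges ps t = {(ps ! i, i) | i. 0 < i \<and> (\<exists>k. (parent ps ^^ k) t = i)}"

definition path_len :: "nat list \<Rightarrow> real list \<Rightarrow> real list \<Rightarrow> nat set \<Rightarrow> nat \<Rightarrow> real" where
  "path_len ps ws us S t = (\<Sum>e\<in>path_edges ps t. wbar ps ws us S e)"

definition objective :: "nat list \<Rightarrow> real list \<Rightarrow> real list \<Rightarrow> nat set \<Rightarrow> real" where
  "objective ps ws us S = Min (path_len ps ws us S ` leaves ps)"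

definition feasible :: "nat list \<Rightarrow> nat \<Rightarrow> nat set \<Rightarrow> bool" where
  "feasible ps K S \<longleftrightarrow> S \<subseteq> tV ps \<and> card S \<le> K"

definition opt_value :: "nat list \<Rightarrow> real list \<Rightarrow> real list \<Rightarrow> nat \<Rightarrow> real" where
  "opt_value ps ws us K = Max (objective ps ws us ` {S. feasible ps K S})"

text \<open>DP table of a vertex v: list indexed by k = 0..K of (best value, upgraded vertices)
for the subtree of v using at most k upgrades.\<close>

fun kids :: "nat \<Rightarrow> nat list \<Rightarrow> nat \<Rightarrow> nat list" where
  "kids v [] i = []"
| "kids v (p # ps) i = (if p = v \<and> i \<noteq> 0 then i # kids v ps (Suc i) else kids v ps (Suc i))"

fun zeros :: "nat \<Rightarrow> (real \<times> nat list) list" where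
  "zeros 0 = []"
| "zeros (Suc k) = (0, []) # zeros k"

fun shift :: "real \<Rightarrow> (real \<times> nat list) list \<Rightarrow> (real \<times> nat list) list" where
  "shift L [] = []"
| "shift L ((a, s) # xs) = (L + a, s) # shift L xs"

fun bestk :: "(real \<times> nat list) list \<Rightarrow> (real \<times> nat list) list \<Rightarrow> real \<times> nat list \<times> nat list
    \<Rightarrow> real \<times> nat list \<times> nat list" where
  "bestk ((g, s1) # gs) ((c, s2) # cs) (b, t1, t2) =
     bestk gs cs (if b < min g c then (min g c, s1, s2) else (b, t1, t2))"
| "bestk gs cs best = best"

fun bestk0 :: "(real \<times> nat list) list \<Rightarrow> (real \<times> nat list) list \<Rightarrow> real \<times> nat list \<times> nat list" where
  "bestk0 ((g, s1) # gs) ((c, s2) # cs) = bestk gs cs (min g c, s1, s2)"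
| "bestk0 gs cs = (0, [], [])"

fun fin :: "real \<times> nat list \<times> nat list \<Rightarrow> real \<times> nat list" where
  "fin (m, s1, s2) = (m, s1 @ s2)"

fun mergeAt :: "(real \<times> nat list) list \<Rightarrow> (real \<times> nat list) list \<Rightarrow> nat \<Rightarrow> real \<times> nat list" where
  "mergeAt G C k = fin (bestk0 (itrev (take (Suc k) G) []) C)"

fun mergeFrom :: "(real \<times> nat list) list \<Rightarrow> (real \<times> nat list) list \<Rightarrow> nat \<Rightarrow> nat
    \<Rightarrow> (real \<times> nat list) list" where
  "mergeFrom G C k 0 = []"
| "mergeFrom G C k (Suc r) = mergeAt G C k # mergeFrom G C (Suc k) r"

fun childTab :: "real list \<Rightarrow> (real \<times> nat list) list list \<Rightarrow> nat \<Rightarrow> nat \<Rightarrow> (real \<times> nat list) list" where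
  "childTab ls acc v c = shift (ls ! c) (acc ! (c - v - 1))"

fun mergeKids :: "real list \<Rightarrow> (real \<times> nat list) list list \<Rightarrow> nat \<Rightarrow> nat \<Rightarrow> (real \<times> nat list) list
    \<Rightarrow> nat list \<Rightarrow> (real \<times> nat list) list" where
  "mergeKids ls acc v K G [] = G"
| "mergeKids ls acc v K G (c # cs) = mergeKids ls acc v K (mergeFrom G (childTab ls acc v c) 0 (Suc K)) cs"

fun kidsTab :: "real list \<Rightarrow> (real \<times> nat list) list list \<Rightarrow> nat \<Rightarrow> nat \<Rightarrow> nat list
    \<Rightarrow> (real \<times> nat list) list" where
  "kidsTab ls acc v K [] = []"
| "kidsTab ls acc v K (c # cs) = mergeKids ls acc v K (childTab ls acc v c) cs"

fun cx2 :: "(real \<times> nat list) list \<Rightarrow> (real \<times> nat list) list \<Rightarrow> nat \<Rightarrow> (real \<times> nat list) list" where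
  "cx2 ((a, sa) # as) ((b, sb) # bs) v = (if a < b then (b, v # sb) else (a, sa)) # cx2 as bs v"
| "cx2 as bs v = []"

fun cx :: "(real \<times> nat list) list \<Rightarrow> (real \<times> nat list) list \<Rightarrow> nat \<Rightarrow> (real \<times> nat list) list" where
  "cx (t # ts) T1 v = t # cx2 ts T1 v"
| "cx [] T1 v = []"

fun node :: "nat list \<Rightarrow> real list \<Rightarrow> real list \<Rightarrow> nat \<Rightarrow> nat \<Rightarrow> (real \<times> nat list) list list
    \<Rightarrow> (real \<times> nat list) list" where
  "node ps ws us K v acc =
     (let cs = kids v ps 0 in
      if cs = [] then zeros (Suc K)
      else cx (kidsTab ws acc v K cs) (kidsTab us acc v K cs) v)"

fun build :: "nat list \<Rightarrow> real list \<Rightarrow> real list \<Rightarrow> nat \<Rightarrow> nat \<Rightarrow> (real \<times> nat list) list list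
    \<Rightarrow> (real \<times> nat list) list list" where
  "build ps ws us K 0 acc = acc"
| "build ps ws us K (Suc v) acc = build ps ws us K v (node ps ws us K v acc # acc)"

fun mem :: "nat \<Rightarrow> nat list \<Rightarrow> bool" where
  "mem x [] = False"
| "mem x (y # ys) = (x = y \<or> mem x ys)"

text \<open>Upgraded length vector, indexed like ws/us by the child endpoint of the edge.\<close>
fun wbList :: "nat list \<Rightarrow> real list \<Rightarrow> real list \<Rightarrow> nat list \<Rightarrow> real list" where
  "wbList (p # ps) (w # ws) (u # us) S = (if mem p S then u else w) # wbList ps ws us S"
| "wbList ps ws us S = []"

fun out :: "nat list \<Rightarrow> real list \<Rightarrow> real list \<Rightarrow> real \<times> nat list \<Rightarrow> real \<times> nat list \<times> real list" where
  "out ps ws us (val, S) = (val, S, wbList ps ws us S)"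

fun alg :: "nat list \<Rightarrow> real list \<Rightarrow> real list \<Rightarrow> nat \<Rightarrow> real \<times> nat list \<times> real list" where
  "alg ps ws us K =
     (let n = length ps; Kc = min K n in
      out ps ws us (build ps ws us Kc n [] ! 0 ! Kc))"


text \<open>Library operations take, itrev, nth,
append, length use the library's T_ functions; arithmetic, comparisons, min are 0-time.\<close>

fun T_kids :: "nat \<Rightarrow> nat list \<Rightarrow> nat \<Rightarrow> nat" where
  "T_kids v [] i = 1"
| "T_kids v (p # ps) i = T_kids v ps (Suc i) + 1"

fun T_zeros :: "nat \<Rightarrow> nat" where
  "T_zeros 0 = 1"
| "T_zeros (Suc k) = T_zeros k + 1"

fun T_shift :: "real \<Rightarrow> (real \<times> nat list) list \<Rightarrow> nat" where
  "T_shift L [] = 1"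
| "T_shift L ((a, s) # xs) = T_shift L xs + 1"

fun T_bestk :: "(real \<times> nat list) list \<Rightarrow> (real \<times> nat list) list \<Rightarrow> real \<times> nat list \<times> nat list \<Rightarrow> nat" where
  "T_bestk ((g, s1) # gs) ((c, s2) # cs) (b, t1, t2) =
     T_bestk gs cs (if b < min g c then (min g c, s1, s2) else (b, t1, t2)) + 1"
| "T_bestk gs cs best = 1"

fun T_bestk0 :: "(real \<times> nat list) list \<Rightarrow> (real \<times> nat list) list \<Rightarrow> nat" where
  "T_bestk0 ((g, s1) # gs) ((c, s2) # cs) = T_bestk gs cs (min g c, s1, s2)"
| "T_bestk0 gs cs = 0"

fun T_fin :: "real \<times> nat list \<times> nat list \<Rightarrow> nat" where
  "T_fin (m, s1, s2) = T_append s1 s2"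

fun T_mergeAt :: "(real \<times> nat list) list \<Rightarrow> (real \<times> nat list) list \<Rightarrow> nat \<Rightarrow> nat" where
  "T_mergeAt G C k =
     T_take (Suc k) G + T_itrev (take (Suc k) G) [] +
     T_bestk0 (itrev (take (Suc k) G) []) C +
     T_fin (bestk0 (itrev (take (Suc k) G) []) C)"

fun T_mergeFrom :: "(real \<times> nat list) list \<Rightarrow> (real \<times> nat list) list \<Rightarrow> nat \<Rightarrow> nat \<Rightarrow> nat" where
  "T_mergeFrom G C k 0 = 1"
| "T_mergeFrom G C k (Suc r) = T_mergeAt G C k + T_mergeFrom G C (Suc k) r + 1"

fun T_childTab :: "real list \<Rightarrow> (real \<times> nat list) list list \<Rightarrow> nat \<Rightarrow> nat \<Rightarrow> nat" where
  "T_childTab ls acc v c =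
     T_nth ls c + (T_nth acc (c - v - 1) + T_shift (ls ! c) (acc ! (c - v - 1)))"

fun T_mergeKids :: "real list \<Rightarrow> (real \<times> nat list) list list \<Rightarrow> nat \<Rightarrow> nat
    \<Rightarrow> (real \<times> nat list) list \<Rightarrow> nat list \<Rightarrow> nat" where
  "T_mergeKids ls acc v K G [] = 1"
| "T_mergeKids ls acc v K G (c # cs) =
     T_childTab ls acc v c + T_mergeFrom G (childTab ls acc v c) 0 (Suc K) +
     T_mergeKids ls acc v K (mergeFrom G (childTab ls acc v c) 0 (Suc K)) cs + 1"

fun T_kidsTab :: "real list \<Rightarrow> (real \<times> nat list) list list \<Rightarrow> nat \<Rightarrow> nat \<Rightarrow> nat list \<Rightarrow> nat" where
  "T_kidsTab ls acc v K [] = 0"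
| "T_kidsTab ls acc v K (c # cs) = T_childTab ls acc v c + T_mergeKids ls acc v K (childTab ls acc v c) cs"

fun T_cx2 :: "(real \<times> nat list) list \<Rightarrow> (real \<times> nat list) list \<Rightarrow> nat \<Rightarrow> nat" where
  "T_cx2 ((a, sa) # as) ((b, sb) # bs) v = T_cx2 as bs v + 1"
| "T_cx2 as bs v = 1"

fun T_cx :: "(real \<times> nat list) list \<Rightarrow> (real \<times> nat list) list \<Rightarrow> nat \<Rightarrow> nat" where
  "T_cx (t # ts) T1 v = T_cx2 ts T1 v"
| "T_cx [] T1 v = 0"

fun T_node :: "nat list \<Rightarrow> real list \<Rightarrow> real list \<Rightarrow> nat \<Rightarrow> nat \<Rightarrow> (real \<times> nat list) list list \<Rightarrow> nat" where
  "T_node ps ws us K v acc =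
     T_kids v ps 0 +
     (let cs = kids v ps 0
      in if cs = [] then T_zeros (Suc K)
         else T_kidsTab ws acc v K cs +
              (T_kidsTab us acc v K cs +
               T_cx (kidsTab ws acc v K cs) (kidsTab us acc v K cs) v))"

fun T_build :: "nat list \<Rightarrow> real list \<Rightarrow> real list \<Rightarrow> nat \<Rightarrow> nat \<Rightarrow> (real \<times> nat list) list list \<Rightarrow> nat" where
  "T_build ps ws us K 0 acc = 1"
| "T_build ps ws us K (Suc v) acc =
     T_node ps ws us K v acc + T_build ps ws us K v (node ps ws us K v acc # acc) + 1"

fun T_mem :: "nat \<Rightarrow> nat list \<Rightarrow> nat" where
  "T_mem x [] = 1"
| "T_mem x (y # ys) = T_mem x ys + 1"

fun T_wbList :: "nat list \<Rightarrow> real list \<Rightarrow> real list \<Rightarrow> nat list \<Rightarrow> nat" where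
  "T_wbList (p # ps) (w # ws) (u # us) S = T_mem p S + T_wbList ps ws us S + 1"
| "T_wbList ps ws us S = 1"

fun T_out :: "nat list \<Rightarrow> real list \<Rightarrow> real list \<Rightarrow> real \<times> nat list \<Rightarrow> nat" where
  "T_out ps ws us (val, S) = T_wbList ps ws us S"

fun T_alg :: "nat list \<Rightarrow> real list \<Rightarrow> real list \<Rightarrow> nat \<Rightarrow> nat" where
  "T_alg ps ws us K =
     T_length ps +
     (let n = length ps; Kc = min K n
      in T_build ps ws us Kc n [] + T_nth (build ps ws us Kc n []) 0 +
         T_nth (build ps ws us Kc n [] ! 0) Kc +
         T_out ps ws us (build ps ws us Kc n [] ! 0 ! Kc))"

end

theory Submission
  imports Defs
begin

definition desc :: "nat list \<Rightarrow> nat \<Rightarrow> nat \<Rightarrow> bool" where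
  "desc ps v t \<longleftrightarrow> (\<exists>k. (parent ps ^^ k) t = v)"

definition sub :: "nat list \<Rightarrow> nat \<Rightarrow> nat set" where
  "sub ps v = {t. t < length ps \<and> desc ps v t}"

function hh :: "nat list \<Rightarrow> real list \<Rightarrow> real list \<Rightarrow> nat set \<Rightarrow> nat \<Rightarrow> real" where
  "hh ps ws us S v = (if {c. v < c \<and> c < length ps \<and> ps!c = v} = {} then 0
     else Min ((\<lambda>c. (if v \<in> S then us!c else ws!c) + hh ps ws us S c) ` {c. v < c \<and> c < length ps \<and> ps!c = v}))"
  by pat_completeness auto
termination by (relation "measure (\<lambda>(ps,ws,us,S,v). length ps - v)") auto

declare hh.simps[simp del]

lemma parent_pow0: "(parent ps ^^ k) 0 = 0"
  by (induction k) (auto simp: parent_def)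

lemma desc_step: "desc ps v t \<longleftrightarrow> t = v \<or> (t \<noteq> 0 \<and> desc ps v (ps!t))"
proof
  assume "desc ps v t"
  then obtain k where k: "(parent ps ^^ k) t = v" by (auto simp: desc_def)
  show "t = v \<or> (t \<noteq> 0 \<and> desc ps v (ps!t))"
  proof (cases k)
    case 0 then show ?thesis using k by simp
  next
    case (Suc k')
    show ?thesis
    proof (cases "t = 0")
      case True then show ?thesis using k parent_pow0 by metis
    next
      case False
      have "(parent ps ^^ k') (ps!t) = v" using k Suc False
        by (simp add: funpow_Suc_right parent_def del: funpow.simps)
      then show ?thesis using False by (auto simp: desc_def)
    qed
  qed
next
  assume "t = v \<or> (t \<noteq> 0 \<and> desc ps v (ps!t))"
  then show "desc ps v t"
  proof
    assume "t = v" then show ?thesis by (auto simp: desc_def intro: exI[of _ 0])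
  next
    assume a: "t \<noteq> 0 \<and> desc ps v (ps!t)"
    then obtain k where k: "(parent ps ^^ k) (ps!t) = v" by (auto simp: desc_def)
    have "(parent ps ^^ Suc k) t = (parent ps ^^ k) (parent ps t)" by (simp only: funpow_Suc_right comp_apply)
    also have "parent ps t = ps!t" using a by (simp add: parent_def)
    finally have "(parent ps ^^ Suc k) t = v" using k by simp
    then show ?thesis unfolding desc_def by (rule exI)
  qed
qed

lemma desc_refl: "desc ps v v" by (subst desc_step) simp

lemma desc_trans: "desc ps a b \<Longrightarrow> desc ps b c \<Longrightarrow> desc ps a c"
proof -
  assume "desc ps a b" "desc ps b c"
  then obtain k1 k2 where "(parent ps ^^ k1) b = a" "(parent ps ^^ k2) c = b" by (auto simp: desc_def)
  then have "(parent ps ^^ (k1 + k2)) c = a" by (simp add: funpow_add)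
  then show ?thesis by (auto simp: desc_def)
qed

lemma desc_total: "desc ps a t \<Longrightarrow> desc ps b t \<Longrightarrow> desc ps a b \<or> desc ps b a"
proof -
  assume "desc ps a t" "desc ps b t"
  then obtain k1 k2 where k: "(parent ps ^^ k1) t = a" "(parent ps ^^ k2) t = b" by (auto simp: desc_def)
  show ?thesis
  proof (cases "k1 \<le> k2")
    case True
    then have "(parent ps ^^ (k2 - k1)) a = b" using k
      by (metis le_add_diff_inverse2 funpow_add comp_apply)
    then show ?thesis by (auto simp: desc_def)
  next
    case False
    then have "(parent ps ^^ (k1 - k2)) b = a" using k
      by (metis nat_le_linear le_add_diff_inverse2 funpow_add comp_apply)
    then show ?thesis by (auto simp: desc_def)
  qed
qed

locale TI =
  fixes ps :: "nat list" and ws us :: "real list"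
  assumes ti: "tree_input ps ws us"
begin

abbreviation "n \<equiv> length ps"

lemma n_pos: "1 \<le> n" using ti by (simp add: tree_input_def)
lemma par_lt: "0 < i \<Longrightarrow> i < n \<Longrightarrow> ps!i < i" using ti by (simp add: tree_input_def)
lemma len_ws: "length ws = n" using ti by (simp add: tree_input_def)
lemma len_us: "length us = n" using ti by (simp add: tree_input_def)

lemma desc_le: "t < n \<Longrightarrow> desc ps v t \<Longrightarrow> v \<le> t"
proof (induction t rule: less_induct)
  case (less t)
  show ?case
  proof (cases "t = v")
    case True then show ?thesis by simp
  next
    case False
    then have "t \<noteq> 0" "desc ps v (ps!t)" using less.prems desc_step by blast+
    moreover have "ps!t < t" using par_lt \<open>t \<noteq> 0\<close> less.prems by simp
    ultimately show ?thesis using less.IH less.prems by fastforce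
  qed
qed

lemma desc_0: "t < n \<Longrightarrow> desc ps 0 t"
proof (induction t rule: less_induct)
  case (less t)
  show ?case
  proof (cases "t = 0")
    case True then show ?thesis by (simp add: desc_refl)
  next
    case False
    then have "ps!t < t" using par_lt less.prems by simp
    then have "desc ps 0 (ps!t)" using less by simp
    then show ?thesis using False desc_step by blast
  qed
qed

lemma kid_exists: "t < n \<Longrightarrow> desc ps v t \<Longrightarrow> t \<noteq> v \<Longrightarrow> \<exists>c. v < c \<and> c < n \<and> ps!c = v \<and> desc ps c t"
proof (induction t rule: less_induct)
  case (less t)
  then have t0: "t \<noteq> 0" and d: "desc ps v (ps!t)" using desc_step by blast+
  have lt: "ps!t < t" using par_lt t0 less.prems by simp
  show ?case
  proof (cases "ps!t = v")
    case True then show ?thesis using lt less.prems desc_refl by auto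
  next
    case False
    then obtain c where c: "v < c" "c < n" "ps!c = v" "desc ps c (ps!t)" using less.IH[OF lt _ d] lt less.prems by auto
    have "desc ps c t" using c(4) t0 desc_step by blast
    then show ?thesis using c by auto
  qed
qed

lemma kid_desc: "0 < c \<Longrightarrow> desc ps (ps!c) c"
  using desc_step desc_refl by blast

lemma sub_kid: "v < c \<Longrightarrow> c < n \<Longrightarrow> ps!c = v \<Longrightarrow> sub ps c \<subseteq> sub ps v"
  unfolding sub_def using kid_desc desc_trans by (metis (mono_tags, lifting) gr_zeroI less_nat_zero_code mem_Collect_eq subsetI)

lemma v_notin_sub_kid: "v < c \<Longrightarrow> c < n \<Longrightarrow> v \<notin> sub ps c"
  unfolding sub_def using desc_le by fastforce

lemma v_in_sub: "v < n \<Longrightarrow> v \<in> sub ps v"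
  unfolding sub_def using desc_refl by auto

lemma sub_disj: "v < c1 \<Longrightarrow> c1 < n \<Longrightarrow> ps!c1 = v \<Longrightarrow> v < c2 \<Longrightarrow> c2 < n \<Longrightarrow> ps!c2 = v \<Longrightarrow> c1 \<noteq> c2
   \<Longrightarrow> sub ps c1 \<inter> sub ps c2 = {}"
proof (rule ccontr)
  assume a: "v < c1" "c1 < n" "ps!c1 = v" "v < c2" "c2 < n" "ps!c2 = v" "c1 \<noteq> c2" "sub ps c1 \<inter> sub ps c2 \<noteq> {}"
  then obtain t where "desc ps c1 t" "desc ps c2 t" unfolding sub_def by auto
  then have "desc ps c1 c2 \<or> desc ps c2 c1" using desc_total by blast
  then show False
  proof
    assume "desc ps c1 c2"
    then have "desc ps c1 v" using a desc_step by (metis gr_implies_not0)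
    then have "c1 \<le> v" using desc_le[of v c1] a by auto
    then show False using a by simp
  next
    assume "desc ps c2 c1"
    then have "desc ps c2 v" using a desc_step by (metis gr_implies_not0)
    then have "c2 \<le> v" using desc_le[of v c2] a by auto
    then show False using a by simp
  qed
qed

lemma sub_fin: "finite (sub ps v)" unfolding sub_def by auto

lemma sub_sub_tV: "sub ps v \<subseteq> tV ps" unfolding sub_def tV_def by auto

lemma sub_split: "v < n \<Longrightarrow> sub ps v = insert v (\<Union>c\<in>{c. v < c \<and> c < n \<and> ps!c = v}. sub ps c)"
proof
  assume v: "v < n"
  show "sub ps v \<subseteq> insert v (\<Union>c\<in>{c. v < c \<and> c < n \<and> ps!c = v}. sub ps c)"
  proof
    fix t assume "t \<in> sub ps v"
    then have "t < n" "desc ps v t" unfolding sub_def by auto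
    then show "t \<in> insert v (\<Union>c\<in>{c. v < c \<and> c < n \<and> ps!c = v}. sub ps c)"
      using kid_exists[of t v] unfolding sub_def by auto
  qed
  show "insert v (\<Union>c\<in>{c. v < c \<and> c < n \<and> ps!c = v}. sub ps c) \<subseteq> sub ps v"
    using v_in_sub[OF v] sub_kid by auto
qed

lemma hh_loc: "v < n \<Longrightarrow> hh ps ws us S v = hh ps ws us (S \<inter> sub ps v) v"
proof (induction "n - v" arbitrary: v S rule: less_induct)
  case less
  let ?C = "{c. v < c \<and> c < n \<and> ps!c = v}"
  have "\<And>c. c \<in> ?C \<Longrightarrow> hh ps ws us S c = hh ps ws us (S \<inter> sub ps v) c"
  proof -
    fix c assume c: "c \<in> ?C"
    then have sc: "sub ps c \<subseteq> sub ps v" using sub_kid by auto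
    have "hh ps ws us S c = hh ps ws us (S \<inter> sub ps c) c" using less.hyps[of c S] c less.prems by auto
    also have "S \<inter> sub ps c = (S \<inter> sub ps v) \<inter> sub ps c" using sc by auto
    also have "hh ps ws us ((S \<inter> sub ps v) \<inter> sub ps c) c = hh ps ws us (S \<inter> sub ps v) c"
      using less.hyps[of c "S \<inter> sub ps v"] c less.prems by auto
    finally show "hh ps ws us S c = hh ps ws us (S \<inter> sub ps v) c" .
  qed
  moreover have "(v \<in> S) = (v \<in> S \<inter> sub ps v)" using v_in_sub less.prems by auto
  ultimately have C: "(\<lambda>c. (if v \<in> S then us!c else ws!c) + hh ps ws us S c) ` ?C
     = (\<lambda>c. (if v \<in> S \<inter> sub ps v then us!c else ws!c) + hh ps ws us (S \<inter> sub ps v) c) ` ?C"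
    by (intro image_cong) auto
  have e1: "hh ps ws us S v = (if ?C = {} then 0 else Min ((\<lambda>c. (if v \<in> S then us!c else ws!c) + hh ps ws us S c) ` ?C))"
    by (rule hh.simps)
  have e2: "hh ps ws us (S \<inter> sub ps v) v = (if ?C = {} then 0 else Min ((\<lambda>c. (if v \<in> S \<inter> sub ps v then us!c else ws!c) + hh ps ws us (S \<inter> sub ps v) c) ` ?C))"
    by (rule hh.simps)
  show ?case unfolding e1 e2 C ..
qed

end

context TI begin

definition lenS :: "nat set \<Rightarrow> nat \<Rightarrow> real" where
  "lenS S i = (if ps!i \<in> S then us!i else ws!i)"

lemma ps_ne: "ps \<noteq> []" using n_pos by auto

lemma path_edges_eq: "path_edges ps t = (\<lambda>i. (ps!i, i)) ` {i. 0<i \<and> desc ps i t}"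
  unfolding path_edges_def desc_def by auto

lemma wbar_edge: "0<i \<Longrightarrow> i<n \<Longrightarrow> wbar ps ws us S (ps!i, i) = lenS S i"
  unfolding wbar_def tA_def tE_def w_len_def lenS_def by auto

lemma anc_fin: "t<n \<Longrightarrow> finite {i. 0<i \<and> desc ps i t}"
proof -
  assume "t < n"
  then have "{i. 0<i \<and> desc ps i t} \<subseteq> {..t}" using desc_le by auto
  then show ?thesis using finite_subset by blast
qed

lemma path_len_sum: "t<n \<Longrightarrow> path_len ps ws us S t = (\<Sum>i\<in>{i. 0<i \<and> desc ps i t}. lenS S i)"
proof -
  assume t: "t < n"
  have inj: "inj_on (\<lambda>i. (ps!i, i)) {i. 0<i \<and> desc ps i t}" by (auto intro: inj_onI)
  have "path_len ps ws us S t = (\<Sum>i\<in>{i. 0<i \<and> desc ps i t}. wbar ps ws us S (ps!i, i))"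
    unfolding path_len_def path_edges_eq using sum.reindex[OF inj] by (simp add: comp_def)
  also have "\<dots> = (\<Sum>i\<in>{i. 0<i \<and> desc ps i t}. lenS S i)"
  proof (rule sum.cong)
    fix i assume "i \<in> {i. 0<i \<and> desc ps i t}"
    then have "0 < i" "i < n" using desc_le t by fastforce+
    then show "wbar ps ws us S (ps!i, i) = lenS S i" by (rule wbar_edge)
  qed simp
  finally show ?thesis .
qed

lemma path_len_0: "path_len ps ws us S 0 = 0"
proof -
  have e: "{i. 0<i \<and> desc ps i 0} = {}" using desc_le n_pos by fastforce
  have "path_len ps ws us S 0 = (\<Sum>i\<in>{i. 0<i \<and> desc ps i 0}. lenS S i)" using path_len_sum[of 0] ps_ne by simp
  then show ?thesis unfolding e by simp
qed

lemma path_len_step: "0<t \<Longrightarrow> t<n \<Longrightarrow> path_len ps ws us S t = path_len ps ws us S (ps!t) + lenS S t"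
proof -
  assume t: "0 < t" "t < n"
  have lt: "ps!t < t" using par_lt t by simp
  have d: "\<And>i. desc ps i t = (t = i \<or> desc ps i (ps!t))"
    using desc_step[of ps _ t] t by blast
  have eq: "{i. 0<i \<and> desc ps i t} = insert t {i. 0<i \<and> desc ps i (ps!t)}"
    using t unfolding d by auto
  have nin: "t \<notin> {i. 0<i \<and> desc ps i (ps!t)}" using desc_le[of "ps!t" t] lt t by auto
  have "path_len ps ws us S t = lenS S t + (\<Sum>i\<in>{i. 0<i \<and> desc ps i (ps!t)}. lenS S i)"
    unfolding path_len_sum[OF t(2)] eq using nin anc_fin[of "ps!t"] lt t by simp
  also have "\<dots> = lenS S t + path_len ps ws us S (ps!t)" using path_len_sum[of "ps!t"] lt t by simp
  finally show ?thesis by simp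
qed

lemma leaves_iff: "t \<in> leaves ps \<longleftrightarrow> t<n \<and> {c. t<c \<and> c<n \<and> ps!c = t} = {}"
proof -
  have "tA ps t = {} \<longleftrightarrow> \<not>(\<exists>i. 0<i \<and> i<n \<and> ps!i = t)"
    unfolding tA_def tE_def by auto
  also have "\<dots> \<longleftrightarrow> {c. t<c \<and> c<n \<and> ps!c = t} = {}"
  proof
    assume a: "\<not>(\<exists>i. 0<i \<and> i<n \<and> ps!i = t)"
    show "{c. t<c \<and> c<n \<and> ps!c = t} = {}"
    proof (rule ccontr)
      assume "{c. t<c \<and> c<n \<and> ps!c = t} \<noteq> {}"
      then obtain c where "t<c" "c<n" "ps!c = t" by auto
      then show False using a by (metis gr_zeroI less_nat_zero_code)
    qed
  next
    assume a: "{c. t<c \<and> c<n \<and> ps!c = t} = {}"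
    show "\<not>(\<exists>i. 0<i \<and> i<n \<and> ps!i = t)"
    proof
      assume "\<exists>i. 0<i \<and> i<n \<and> ps!i = t"
      then obtain i where i: "0<i" "i<n" "ps!i = t" by blast
      then have "t < i" using par_lt by blast
      then show False using a i by blast
    qed
  qed
  finally show ?thesis unfolding leaves_def tV_def by auto
qed

lemma hh_path: "v<n \<Longrightarrow> (\<forall>t\<in>leaves ps. desc ps v t \<longrightarrow> hh ps ws us S v \<le> path_len ps ws us S t - path_len ps ws us S v)
   \<and> (\<exists>t\<in>leaves ps. desc ps v t \<and> hh ps ws us S v = path_len ps ws us S t - path_len ps ws us S v)"
proof (induction "n - v" arbitrary: v rule: less_induct)
  case less
  let ?C = "{c. v < c \<and> c < n \<and> ps!c = v}"
  let ?f = "\<lambda>c. (if v \<in> S then us!c else ws!c) + hh ps ws us S c"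
  have e: "hh ps ws us S v = (if ?C = {} then 0 else Min (?f ` ?C))" by (rule hh.simps)
  have fin: "finite ?C" by simp
  have fc: "\<And>c. c \<in> ?C \<Longrightarrow> ?f c = lenS S c + hh ps ws us S c" unfolding lenS_def by auto
  have plc: "path_len ps ws us S c = path_len ps ws us S v + lenS S c" if "c \<in> ?C" for c
  proof -
    have "0 < c" "c < n" "ps!c = v" using that by auto
    then show ?thesis using path_len_step[of c S] by simp
  qed
  show ?case
  proof (cases "?C = {}")
    case True
    have h0: "hh ps ws us S v = 0" by (subst e) (rule if_P[OF True])
    have vl: "v \<in> leaves ps" using True less.prems leaves_iff by auto
    have "\<And>t. t \<in> leaves ps \<Longrightarrow> desc ps v t \<Longrightarrow> t = v"
      using kid_exists True leaves_iff by blast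
    then show ?thesis using h0 vl desc_refl by auto
  next
    case False
    have h1: "hh ps ws us S v = Min (?f ` ?C)" by (subst e) (rule if_not_P[OF False])
    have part1: "\<forall>t\<in>leaves ps. desc ps v t \<longrightarrow> hh ps ws us S v \<le> path_len ps ws us S t - path_len ps ws us S v"
    proof (intro ballI impI)
      fix t assume t: "t \<in> leaves ps" "desc ps v t"
      have tn: "t < n" using t leaves_iff by auto
      have "t \<noteq> v" using t False leaves_iff by auto
      then obtain c where c: "c \<in> ?C" "desc ps c t" using kid_exists[OF tn t(2)] by auto
      have "hh ps ws us S v \<le> ?f c" unfolding h1 using c fin by simp
      moreover have "hh ps ws us S c \<le> path_len ps ws us S t - path_len ps ws us S c"
        using less.hyps[of c] c t by auto
      ultimately show "hh ps ws us S v \<le> path_len ps ws us S t - path_len ps ws us S v"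
        using fc[OF c(1)] plc[OF c(1)] by linarith
    qed
    have "Min (?f ` ?C) \<in> ?f ` ?C" using False fin by (intro Min_in) auto
    then obtain c where c: "c \<in> ?C" "hh ps ws us S v = ?f c" using h1 by auto
    have lt: "n - c < n - v" "c < n" using c(1) by auto
    obtain t where t: "t \<in> leaves ps" "desc ps c t" "hh ps ws us S c = path_len ps ws us S t - path_len ps ws us S c"
      using less.hyps[OF lt] by blast
    have "desc ps v t" using desc_trans[OF kid_desc t(2)] c(1) by auto
    moreover have "hh ps ws us S v = path_len ps ws us S t - path_len ps ws us S v"
      using c fc[OF c(1)] plc[OF c(1)] t(3) by linarith
    ultimately show ?thesis using part1 t(1) by blast
  qed
qed

lemma obj_hh: "objective ps ws us S = hh ps ws us S 0"
proof -
  have n0: "0 < n" using n_pos by linarith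
  have finL: "finite (leaves ps)" unfolding leaves_def tV_def by auto
  obtain t0 where t0: "t0 \<in> leaves ps" "hh ps ws us S 0 = path_len ps ws us S t0"
    using hh_path[OF n0, of S] path_len_0 by auto
  have lb: "\<And>t. t \<in> leaves ps \<Longrightarrow> hh ps ws us S 0 \<le> path_len ps ws us S t"
    using hh_path[OF n0, of S] path_len_0 desc_0 leaves_iff ps_ne by auto
  show ?thesis unfolding objective_def
    by (rule Min_eqI) (use finL t0 lb in auto)
qed

end

definition good :: "(nat set \<Rightarrow> real) \<Rightarrow> nat set \<Rightarrow> nat \<Rightarrow> (real \<times> nat list) list \<Rightarrow> bool" where
"good F D K tab \<longleftrightarrow> finite D \<and> (\<forall>S. F S = F (S \<inter> D)) \<and> length tab = Suc K \<and>
  (\<forall>k\<le>K. set (snd (tab!k)) \<subseteq> D \<and> length (snd (tab!k)) \<le> k \<and> F (set (snd (tab!k))) = fst (tab!k)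
      \<and> (\<forall>S\<subseteq>D. card S \<le> k \<longrightarrow> F S \<le> fst (tab!k)))"

lemma shift_map: "shift L xs = map (\<lambda>(a,s). (L+a, s)) xs"
  by (induction L xs rule: shift.induct) auto

lemma good_shift: "good F D K tab \<Longrightarrow> good (\<lambda>S. L + F S) D K (shift L tab)"
  unfolding good_def shift_map by (auto simp: case_prod_beta)

definition bf :: "(real \<times> nat list) \<times> (real \<times> nat list) \<Rightarrow> real \<times> nat list \<times> nat list" where
  "bf p = (min (fst (fst p)) (fst (snd p)), snd (fst p), snd (snd p))"

lemma bestk_char: "bestk xs ys p \<in> insert p (bf ` set (zip xs ys)) \<and> fst p \<le> fst (bestk xs ys p) \<and>
   (\<forall>x\<in>set (zip xs ys). fst (bf x) \<le> fst (bestk xs ys p))"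
proof (induction xs ys p rule: bestk.induct)
  case (1 g s1 gs c s2 cs b t1 t2)
  let ?p' = "if b < min g c then (min g c, s1, s2) else (b, t1, t2)"
  have e: "bestk ((g, s1) # gs) ((c, s2) # cs) (b, t1, t2) = bestk gs cs ?p'" by simp
  have hd: "bf ((g,s1),(c,s2)) = (min g c, s1, s2)" by (simp add: bf_def)
  show ?case unfolding e using "1.IH" hd by (cases "b < min g c") auto
qed auto

lemma bestk0_char: "xs \<noteq> [] \<Longrightarrow> ys \<noteq> [] \<Longrightarrow>
   bestk0 xs ys \<in> bf ` set (zip xs ys) \<and> (\<forall>x\<in>set (zip xs ys). fst (bf x) \<le> fst (bestk0 xs ys))"
proof -
  assume a: "xs \<noteq> []" "ys \<noteq> []"
  obtain g s1 xs' where x: "xs = (g,s1) # xs'" using a(1) by (metis list.exhaust prod.exhaust)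
  obtain c s2 ys' where y: "ys = (c,s2) # ys'" using a(2) by (metis list.exhaust prod.exhaust)
  have hd: "bf ((g,s1),(c,s2)) = (min g c, s1, s2)" by (simp add: bf_def)
  have e: "bestk0 xs ys = bestk xs' ys' (min g c, s1, s2)" using x y by simp
  from bestk_char[of xs' ys' "(min g c, s1, s2)"] show ?thesis unfolding e x y using hd by auto
qed

lemma zipset: "k < length G \<Longrightarrow> k < length C \<Longrightarrow>
  set (zip (itrev (take (Suc k) G) []) C) = (\<lambda>j. (G!(k-j), C!j)) ` {..k}"
proof -
  assume a: "k < length G" "k < length C"
  have l: "length (itrev (take (Suc k) G) []) = Suc k" using a by (simp add: itrev_Nil)
  have nth: "\<And>j. j \<le> k \<Longrightarrow> itrev (take (Suc k) G) [] ! j = G!(k-j)"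
    using a by (simp add: itrev_Nil rev_nth)
  show ?thesis
  proof (intro equalityI subsetI)
    fix x assume "x \<in> set (zip (itrev (take (Suc k) G) []) C)"
    then obtain i where "i < Suc k" "x = (itrev (take (Suc k) G) [] ! i, C ! i)"
      unfolding set_zip using l a by auto
    then show "x \<in> (\<lambda>j. (G!(k-j), C!j)) ` {..k}" using nth by auto
  next
    fix x assume "x \<in> (\<lambda>j. (G!(k-j), C!j)) ` {..k}"
    then obtain j where j: "j \<le> k" "x = (G!(k-j), C!j)" by auto
    then have "x = (itrev (take (Suc k) G) [] ! j, C ! j)" "j < min (length (itrev (take (Suc k) G) [])) (length C)"
      using nth l a by auto
    then show "x \<in> set (zip (itrev (take (Suc k) G) []) C)" unfolding set_zip by blast
  qed
qed

lemma mergeAt_char: "k < length G \<Longrightarrow> k < length C \<Longrightarrow>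
  (\<exists>j\<le>k. fst (mergeAt G C k) = min (fst (G!(k-j))) (fst (C!j)) \<and> snd (mergeAt G C k) = snd (G!(k-j)) @ snd (C!j))
  \<and> (\<forall>j\<le>k. min (fst (G!(k-j))) (fst (C!j)) \<le> fst (mergeAt G C k))"
proof -
  assume a: "k < length G" "k < length C"
  define q where "q = bestk0 (itrev (take (Suc k) G) []) C"
  have ne: "itrev (take (Suc k) G) [] \<noteq> []" "C \<noteq> []" using a by (auto simp: itrev_Nil)
  have m: "mergeAt G C k = (fst q, fst (snd q) @ snd (snd q))" unfolding q_def
    by (cases "bestk0 (itrev (take (Suc k) G) []) C") auto
  note ch = bestk0_char[OF ne, folded q_def, unfolded zipset[OF a]]
  from ch obtain j where j: "j \<le> k" "q = bf (G!(k-j), C!j)" by auto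
  have 1: "\<exists>j\<le>k. fst (mergeAt G C k) = min (fst (G!(k-j))) (fst (C!j)) \<and> snd (mergeAt G C k) = snd (G!(k-j)) @ snd (C!j)"
    using j unfolding m by (intro exI[of _ j]) (simp add: bf_def)
  have 2: "\<forall>j\<le>k. min (fst (G!(k-j))) (fst (C!j)) \<le> fst (mergeAt G C k)"
  proof (intro allI impI)
    fix j assume "j \<le> k"
    then have "fst (bf (G!(k-j), C!j)) \<le> fst q" using ch by auto
    then show "min (fst (G!(k-j))) (fst (C!j)) \<le> fst (mergeAt G C k)" unfolding m by (simp add: bf_def)
  qed
  show ?thesis using 1 2 by blast
qed

lemma mergeFrom_len: "length (mergeFrom G C k r) = r"
  by (induction r arbitrary: k) auto

lemma mergeFrom_nth: "i < r \<Longrightarrow> mergeFrom G C k r ! i = mergeAt G C (k+i)"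
proof (induction r arbitrary: k i)
  case 0 then show ?case by simp
next
  case (Suc r) then show ?case by (cases i) auto
qed

lemma good_merge:
  assumes g1: "good F1 D1 K G" and g2: "good F2 D2 K C" and dj: "D1 \<inter> D2 = {}"
  shows "good (\<lambda>S. min (F1 S) (F2 S)) (D1 \<union> D2) K (mergeFrom G C 0 (Suc K))"
proof -
  have fin1: "finite D1" and loc1: "\<And>S. F1 S = F1 (S \<inter> D1)" and len1: "length G = Suc K"
    and e1: "\<And>k. k \<le> K \<Longrightarrow> set (snd (G!k)) \<subseteq> D1 \<and> length (snd (G!k)) \<le> k \<and> F1 (set (snd (G!k))) = fst (G!k)
      \<and> (\<forall>S\<subseteq>D1. card S \<le> k \<longrightarrow> F1 S \<le> fst (G!k))"
    using g1 unfolding good_def by blast+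
  have fin2: "finite D2" and loc2: "\<And>S. F2 S = F2 (S \<inter> D2)" and len2: "length C = Suc K"
    and e2: "\<And>k. k \<le> K \<Longrightarrow> set (snd (C!k)) \<subseteq> D2 \<and> length (snd (C!k)) \<le> k \<and> F2 (set (snd (C!k))) = fst (C!k)
      \<and> (\<forall>S\<subseteq>D2. card S \<le> k \<longrightarrow> F2 S \<le> fst (C!k))"
    using g2 unfolding good_def by blast+
  have loc: "\<And>S. min (F1 S) (F2 S) = min (F1 (S \<inter> (D1 \<union> D2))) (F2 (S \<inter> (D1 \<union> D2)))"
  proof -
    fix S
    have i1: "(S \<inter> (D1 \<union> D2)) \<inter> D1 = S \<inter> D1" by blast
    have i2: "(S \<inter> (D1 \<union> D2)) \<inter> D2 = S \<inter> D2" by blast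
    have "F1 (S \<inter> (D1 \<union> D2)) = F1 S" using loc1[of "S \<inter> (D1 \<union> D2)"] loc1[of S] unfolding i1 by simp
    moreover have "F2 (S \<inter> (D1 \<union> D2)) = F2 S" using loc2[of "S \<inter> (D1 \<union> D2)"] loc2[of S] unfolding i2 by simp
    ultimately show "min (F1 S) (F2 S) = min (F1 (S \<inter> (D1 \<union> D2))) (F2 (S \<inter> (D1 \<union> D2)))" by simp
  qed
  have entry: "set (snd (mergeAt G C k)) \<subseteq> D1 \<union> D2 \<and> length (snd (mergeAt G C k)) \<le> k
      \<and> min (F1 (set (snd (mergeAt G C k)))) (F2 (set (snd (mergeAt G C k)))) = fst (mergeAt G C k)
      \<and> (\<forall>S\<subseteq>D1 \<union> D2. card S \<le> k \<longrightarrow> min (F1 S) (F2 S) \<le> fst (mergeAt G C k))" if k: "k \<le> K" for k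
  proof -
    have kl: "k < length G" "k < length C" using k len1 len2 by auto
    note mc = mergeAt_char[OF kl]
    then obtain j where j: "j \<le> k" "fst (mergeAt G C k) = min (fst (G!(k-j))) (fst (C!j))"
      "snd (mergeAt G C k) = snd (G!(k-j)) @ snd (C!j)" by blast
    have ga: "set (snd (G!(k-j))) \<subseteq> D1" "length (snd (G!(k-j))) \<le> k - j" "F1 (set (snd (G!(k-j)))) = fst (G!(k-j))"
      using e1[of "k-j"] k by auto
    have ca: "set (snd (C!j)) \<subseteq> D2" "length (snd (C!j)) \<le> j" "F2 (set (snd (C!j))) = fst (C!j)"
      using e2[of j] k j by auto
    let ?s = "set (snd (mergeAt G C k))"
    have s: "?s = set (snd (G!(k-j))) \<union> set (snd (C!j))" using j by simp
    have "?s \<inter> D1 = set (snd (G!(k-j)))" using s ga ca dj by blast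
    then have f1: "F1 ?s = fst (G!(k-j))" using loc1[of ?s] ga by simp
    have "?s \<inter> D2 = set (snd (C!j))" using s ga ca dj by blast
    then have f2: "F2 ?s = fst (C!j)" using loc2[of ?s] ca by simp
    have opt: "min (F1 S) (F2 S) \<le> fst (mergeAt G C k)" if S: "S \<subseteq> D1 \<union> D2" "card S \<le> k" for S
    proof -
      have fS: "finite S" using S fin1 fin2 finite_subset by blast
      have cs: "card S = card (S \<inter> D1) + card (S \<inter> D2)"
      proof -
        have "S = (S \<inter> D1) \<union> (S \<inter> D2)" using S by blast
        then have "card S = card ((S \<inter> D1) \<union> (S \<inter> D2))" by simp
        also have "\<dots> = card (S \<inter> D1) + card (S \<inter> D2)" using fS dj by (intro card_Un_disjoint) auto
        finally show ?thesis .
      qed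
      define j' where "j' = card (S \<inter> D2)"
      have j'k: "j' \<le> k" using cs S j'_def by simp
      have "card (S \<inter> D1) \<le> k - j'" using cs S j'_def by simp
      moreover have "k - j' \<le> K" using k by simp
      moreover have "S \<inter> D1 \<subseteq> D1" by blast
      ultimately have "F1 (S \<inter> D1) \<le> fst (G!(k-j'))" using e1[of "k-j'"] by blast
      then have "F1 S \<le> fst (G!(k-j'))" using loc1[of S] by simp
      have "j' \<le> K" using k j'k by simp
      moreover have "S \<inter> D2 \<subseteq> D2" by blast
      ultimately have "F2 (S \<inter> D2) \<le> fst (C!j')" using e2[of j'] j'_def by blast
      then have "F2 S \<le> fst (C!j')" using loc2[of S] by simp
      note this \<open>F1 S \<le> fst (G!(k-j'))\<close>
      moreover have "min (fst (G!(k-j'))) (fst (C!j')) \<le> fst (mergeAt G C k)" using mc j'k by blast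
      ultimately show ?thesis by linarith
    qed
    have lenk: "length (snd (mergeAt G C k)) \<le> k" using j(1) j(3) ga(2) ca(2) by simp
    have sub: "?s \<subseteq> D1 \<union> D2" using s ga(1) ca(1) by blast
    have fv: "min (F1 ?s) (F2 ?s) = fst (mergeAt G C k)" using f1 f2 j(2) by simp
    show ?thesis using lenk sub fv opt by blast
  qed
  have all: "\<forall>k\<le>K. set (snd (mergeFrom G C 0 (Suc K) ! k)) \<subseteq> D1 \<union> D2 \<and>
          length (snd (mergeFrom G C 0 (Suc K) ! k)) \<le> k \<and>
          min (F1 (set (snd (mergeFrom G C 0 (Suc K) ! k)))) (F2 (set (snd (mergeFrom G C 0 (Suc K) ! k)))) =
          fst (mergeFrom G C 0 (Suc K) ! k) \<and>
          (\<forall>S\<subseteq>D1 \<union> D2. card S \<le> k \<longrightarrow> min (F1 S) (F2 S) \<le> fst (mergeFrom G C 0 (Suc K) ! k))"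
  proof (intro allI impI)
    fix k assume k: "k \<le> K"
    have kk: "k < Suc K" using k by simp
    have e: "mergeFrom G C 0 (Suc K) ! k = mergeAt G C k" using mergeFrom_nth[OF kk, of G C 0] by (simp only: add_0)
    show "set (snd (mergeFrom G C 0 (Suc K) ! k)) \<subseteq> D1 \<union> D2 \<and>
          length (snd (mergeFrom G C 0 (Suc K) ! k)) \<le> k \<and>
          min (F1 (set (snd (mergeFrom G C 0 (Suc K) ! k)))) (F2 (set (snd (mergeFrom G C 0 (Suc K) ! k)))) =
          fst (mergeFrom G C 0 (Suc K) ! k) \<and>
          (\<forall>S\<subseteq>D1 \<union> D2. card S \<le> k \<longrightarrow> min (F1 S) (F2 S) \<le> fst (mergeFrom G C 0 (Suc K) ! k))"
      unfolding e by (rule entry[OF k])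
  qed
  have fin: "finite (D1 \<union> D2)" using fin1 fin2 by simp
  have len: "length (mergeFrom G C 0 (Suc K)) = Suc K" by (simp add: mergeFrom_len)
  show ?thesis unfolding good_def using fin len all loc by blast
qed

lemma Min_insert_insert: "finite A \<Longrightarrow> Min (insert (a::real) (insert b A)) = Min (insert (min a b) A)"
  by (cases "A = {}") (auto simp: min.assoc)

lemma good_cong: "good F D K tab \<Longrightarrow> (\<And>S. F S = F' S) \<Longrightarrow> good F' D K tab"
proof -
  assume "good F D K tab" "\<And>S. F S = F' S"
  moreover have "F = F'" using calculation(2) by (rule ext)
  ultimately show ?thesis by simp
qed

lemma zeros_rep: "zeros k = replicate k (0, [])"
  by (induction k) auto

fun cxf :: "nat \<Rightarrow> real \<times> nat list \<Rightarrow> real \<times> nat list \<Rightarrow> real \<times> nat list" where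
  "cxf v (a, sa) (b, sb) = (if a < b then (b, v # sb) else (a, sa))"

lemma cx2_map: "cx2 xs ys v = map2 (cxf v) xs ys"
  by (induction xs ys v rule: cx2.induct) auto

lemma good_cx:
  assumes gw: "good FW D K W" and gu: "good FU D K U" and v: "v \<notin> D"
  shows "good (\<lambda>S. if v \<in> S then FU S else FW S) (insert v D) K (cx W U v)"
proof -
  have fin: "finite D" and locw: "\<And>S. FW S = FW (S \<inter> D)" and lenw: "length W = Suc K"
    and ew: "\<And>k. k \<le> K \<Longrightarrow> set (snd (W!k)) \<subseteq> D \<and> length (snd (W!k)) \<le> k \<and> FW (set (snd (W!k))) = fst (W!k)
      \<and> (\<forall>S\<subseteq>D. card S \<le> k \<longrightarrow> FW S \<le> fst (W!k))"
    using gw unfolding good_def by blast+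
  have locu: "\<And>S. FU S = FU (S \<inter> D)" and lenu: "length U = Suc K"
    and eu: "\<And>k. k \<le> K \<Longrightarrow> set (snd (U!k)) \<subseteq> D \<and> length (snd (U!k)) \<le> k \<and> FU (set (snd (U!k))) = fst (U!k)
      \<and> (\<forall>S\<subseteq>D. card S \<le> k \<longrightarrow> FU S \<le> fst (U!k))"
    using gu unfolding good_def by blast+
  obtain t ts where W: "W = t # ts" using lenw by (cases W) auto
  have cxe: "cx W U v = t # map2 (cxf v) ts U" unfolding W by (simp add: cx2_map)
  have lts: "length ts = K" using lenw W by simp
  let ?F = "\<lambda>S. if v \<in> S then FU S else FW S"
  have loc: "?F S = ?F (S \<inter> insert v D)" for S
  proof -
    have i: "(S \<inter> insert v D) \<inter> D = S \<inter> D" by blast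
    have "FU (S \<inter> insert v D) = FU S" using locu[of "S \<inter> insert v D"] locu[of S] unfolding i by simp
    moreover have "FW (S \<inter> insert v D) = FW S" using locw[of "S \<inter> insert v D"] locw[of S] unfolding i by simp
    ultimately show ?thesis by auto
  qed
  have e0: "set (snd (cx W U v ! 0)) \<subseteq> insert v D \<and> length (snd (cx W U v ! 0)) \<le> 0 \<and> ?F (set (snd (cx W U v ! 0))) = fst (cx W U v ! 0)
      \<and> (\<forall>S\<subseteq>insert v D. card S \<le> 0 \<longrightarrow> ?F S \<le> fst (cx W U v ! 0))"
  proof -
    have t0: "cx W U v ! 0 = W ! 0" using cxe W by simp
    have a: "set (snd (W!0)) \<subseteq> D" "length (snd (W!0)) \<le> 0" "FW (set (snd (W!0))) = fst (W!0)"
      "FW {} \<le> fst (W!0)" using ew[of 0] by auto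
    have Sd: "\<forall>S\<subseteq>insert v D. card S \<le> 0 \<longrightarrow> ?F S \<le> fst (W ! 0)"
    proof (intro allI impI)
      fix S assume S: "S \<subseteq> insert v D" "card S \<le> 0"
      have "finite S" using S(1) fin finite_subset by blast
      then have "S = {}" using S(2) by simp
      then show "?F S \<le> fst (W!0)" using a(4) by simp
    qed
    have "v \<notin> set (snd (W!0))" using a(1) v by blast
    then have "?F (set (snd (W!0))) = fst (W!0)" using a(3) by simp
    then show ?thesis unfolding t0 using a(1,2) Sd by blast
  qed
  have eS: "set (snd (cx W U v ! Suc k)) \<subseteq> insert v D \<and> length (snd (cx W U v ! Suc k)) \<le> Suc k \<and> ?F (set (snd (cx W U v ! Suc k))) = fst (cx W U v ! Suc k)
      \<and> (\<forall>S\<subseteq>insert v D. card S \<le> Suc k \<longrightarrow> ?F S \<le> fst (cx W U v ! Suc k))" if k: "k < K" for k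
  proof -
    have ent: "cx W U v ! Suc k = cxf v (W ! Suc k) (U ! k)" using cxe W k lts lenu by simp
    obtain a sa where A: "W ! Suc k = (a, sa)" by (cases "W ! Suc k")
    obtain b sb where B: "U ! k = (b, sb)" by (cases "U ! k")
    have wa: "set sa \<subseteq> D" "length sa \<le> Suc k" "FW (set sa) = a" "\<forall>S\<subseteq>D. card S \<le> Suc k \<longrightarrow> FW S \<le> a"
      using ew[of "Suc k"] k A by auto
    have ub: "set sb \<subseteq> D" "length sb \<le> k" "FU (set sb) = b" "\<forall>S\<subseteq>D. card S \<le> k \<longrightarrow> FU S \<le> b"
      using eu[of k] k B by auto
    have vsa: "v \<notin> set sa" using wa v by auto
    have fu: "FU (insert v (set sb)) = b"
    proof -
      have "insert v (set sb) \<inter> D = set sb" using ub v by auto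
      then show ?thesis using locu[of "insert v (set sb)"] ub by simp
    qed
    have opt: "?F S \<le> max a b" if S: "S \<subseteq> insert v D" "card S \<le> Suc k" for S
    proof (cases "v \<in> S")
      case True
      have fS: "finite S" using S fin finite_subset by blast
      have "S \<inter> D = S - {v}" using S v by auto
      moreover have "card (S - {v}) \<le> k" using S True fS by (simp add: card_Diff_singleton)
      moreover have "S - {v} \<subseteq> D" using S by auto
      ultimately have "FU S \<le> b" using ub(4) locu[of S] by auto
      then show ?thesis using True by simp
    next
      case False
      then have "S \<subseteq> D" using S by auto
      then have "FW S \<le> a" using wa(4) S by auto
      then show ?thesis using False by simp
    qed
    show ?thesis
    proof (cases "a < b")
      case True
      have c: "cxf v (a, sa) (b, sb) = (b, v # sb)" using True by simp
      have "\<forall>S\<subseteq>insert v D. card S \<le> Suc k \<longrightarrow> ?F S \<le> b" using opt True by (simp add: max_def)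
      moreover have "set (v # sb) \<subseteq> insert v D" using ub(1) by auto
      moreover have "length (v # sb) \<le> Suc k" using ub(2) by simp
      moreover have "?F (set (v # sb)) = b" using fu by simp
      ultimately show ?thesis unfolding ent A B c fst_conv snd_conv by blast
    next
      case False
      have c: "cxf v (a, sa) (b, sb) = (a, sa)" using False by simp
      have "\<forall>S\<subseteq>insert v D. card S \<le> Suc k \<longrightarrow> ?F S \<le> a" using opt False by (simp add: max_def)
      moreover have "set sa \<subseteq> insert v D" using wa(1) by auto
      moreover have "?F (set sa) = a" using wa(3) vsa by simp
      ultimately show ?thesis unfolding ent A B c fst_conv snd_conv using wa(2) by blast
    qed
  qed
  have len: "length (cx W U v) = Suc K" using cxe lts lenu by simp
  have all: "\<forall>k\<le>K. set (snd (cx W U v ! k)) \<subseteq> insert v D \<and> length (snd (cx W U v ! k)) \<le> k \<and> ?F (set (snd (cx W U v ! k))) = fst (cx W U v ! k)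
      \<and> (\<forall>S\<subseteq>insert v D. card S \<le> k \<longrightarrow> ?F S \<le> fst (cx W U v ! k))"
  proof (intro allI impI)
    fix k assume k: "k \<le> K"
    show "set (snd (cx W U v ! k)) \<subseteq> insert v D \<and> length (snd (cx W U v ! k)) \<le> k \<and> ?F (set (snd (cx W U v ! k))) = fst (cx W U v ! k)
      \<and> (\<forall>S\<subseteq>insert v D. card S \<le> k \<longrightarrow> ?F S \<le> fst (cx W U v ! k))"
    proof (cases k)
      case 0 show ?thesis unfolding 0 by (rule e0)
    next
      case (Suc k')
      then have "k' < K" using k by simp
      then show ?thesis unfolding Suc by (rule eS)
    qed
  qed
  have fin': "finite (insert v D)" using fin by simp
  show ?thesis unfolding good_def using fin' len all loc by blast
qed

lemma kids_mem: "x \<in> set (kids v xs i) \<longleftrightarrow> i \<le> x \<and> x < i + length xs \<and> xs!(x-i) = v \<and> x \<noteq> 0"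
proof (induction xs arbitrary: i)
  case Nil then show ?case by simp
next
  case (Cons p xs)
  show ?case
  proof (cases "x = i")
    case True
    have "i \<notin> set (kids v xs (Suc i))" using Cons.IH[of "Suc i"] True by simp
    then show ?thesis using True by auto
  next
    case False
    have "x \<in> set (kids v (p # xs) i) \<longleftrightarrow> x \<in> set (kids v xs (Suc i))" using False by auto
    also have "\<dots> \<longleftrightarrow> Suc i \<le> x \<and> x < Suc i + length xs \<and> xs!(x - Suc i) = v \<and> x \<noteq> 0" by (rule Cons.IH)
    also have "\<dots> \<longleftrightarrow> i \<le> x \<and> x < i + length (p#xs) \<and> (p#xs)!(x-i) = v \<and> x \<noteq> 0"
    proof -
      have "Suc i \<le> x \<Longrightarrow> (p#xs)!(x-i) = xs!(x - Suc i)"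
        by (metis Suc_diff_Suc Suc_le_lessD diff_Suc_Suc nth_Cons_Suc)
      then show ?thesis using False by auto
    qed
    finally show ?thesis .
  qed
qed

lemma kids_distinct: "distinct (kids v xs i)"
proof (induction xs arbitrary: i)
  case Nil then show ?case by simp
next
  case (Cons p xs)
  have "i \<notin> set (kids v xs (Suc i))" using kids_mem by auto
  then show ?case using Cons.IH by auto
qed

lemma len_kids_Cons: "length (kids v (p # xs) i) = (if p = v \<and> i \<noteq> 0 then 1 else 0) + length (kids v xs (Suc i))"
  by simp

context TI begin

lemma kids_set: "set (kids v ps 0) = {c. v < c \<and> c < n \<and> ps!c = v}"
proof -
  have "x \<in> set (kids v ps 0) \<longleftrightarrow> v < x \<and> x < n \<and> ps!x = v" for x
    unfolding kids_mem using par_lt by fastforce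
  then show ?thesis by auto
qed

lemma good_mergeKids:
  assumes "good F D K G" and "\<forall>c\<in>set cs. v<c \<and> c<n \<and> ps!c = v" and "distinct cs"
    and "\<forall>c\<in>set cs. D \<inter> sub ps c = {}"
    and acc: "\<forall>c\<in>set cs. good (\<lambda>S. hh ps ws us S c) (sub ps c) K (acc!(c-v-1))"
  shows "good (\<lambda>S. Min (insert (F S) ((\<lambda>c. ls!c + hh ps ws us S c) ` set cs))) (D \<union> (\<Union>c\<in>set cs. sub ps c)) K
           (mergeKids ls acc v K G cs)"
  using assms
proof (induction cs arbitrary: F D G)
  case Nil
  then show ?case by (auto intro: good_cong)
next
  case (Cons c cs)
  have gc: "good (\<lambda>S. ls!c + hh ps ws us S c) (sub ps c) K (childTab ls acc v c)"
    using Cons.prems(5) by (simp add: good_shift)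
  have g1: "good (\<lambda>S. min (F S) (ls!c + hh ps ws us S c)) (D \<union> sub ps c) K (mergeFrom G (childTab ls acc v c) 0 (Suc K))"
    using good_merge[OF Cons.prems(1) gc] Cons.prems(4) by simp
  have dj: "\<forall>c'\<in>set cs. (D \<union> sub ps c) \<inter> sub ps c' = {}"
  proof
    fix c' assume c': "c' \<in> set cs"
    then have "c \<noteq> c'" using Cons.prems(3) by auto
    then have "sub ps c \<inter> sub ps c' = {}" using sub_disj Cons.prems(2) c' by auto
    then show "(D \<union> sub ps c) \<inter> sub ps c' = {}" using Cons.prems(4) c' by auto
  qed
  have IH: "good (\<lambda>S. Min (insert (min (F S) (ls!c + hh ps ws us S c)) ((\<lambda>c. ls!c + hh ps ws us S c) ` set cs)))
     (D \<union> sub ps c \<union> (\<Union>c\<in>set cs. sub ps c)) K (mergeKids ls acc v K (mergeFrom G (childTab ls acc v c) 0 (Suc K)) cs)"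
    using Cons.IH[OF g1] Cons.prems dj by auto
  have eqD: "D \<union> sub ps c \<union> (\<Union>c\<in>set cs. sub ps c) = D \<union> (\<Union>c\<in>set (c#cs). sub ps c)" by auto
  show ?case unfolding mergeKids.simps
    using IH unfolding eqD
    by (rule good_cong) (simp only: list.set(2) image_insert, subst Min_insert_insert, auto)
qed

lemma good_kidsTab:
  assumes "cs \<noteq> []" and "\<forall>c\<in>set cs. v<c \<and> c<n \<and> ps!c = v" and "distinct cs"
    and acc: "\<forall>c\<in>set cs. good (\<lambda>S. hh ps ws us S c) (sub ps c) K (acc!(c-v-1))"
  shows "good (\<lambda>S. Min ((\<lambda>c. ls!c + hh ps ws us S c) ` set cs)) (\<Union>c\<in>set cs. sub ps c) K (kidsTab ls acc v K cs)"
proof -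
  obtain c cs' where cs: "cs = c # cs'" using assms(1) by (cases cs) auto
  have gc: "good (\<lambda>S. ls!c + hh ps ws us S c) (sub ps c) K (childTab ls acc v c)"
    using acc cs by (simp add: good_shift)
  have dj: "\<forall>c'\<in>set cs'. sub ps c \<inter> sub ps c' = {}"
  proof
    fix c' assume c': "c' \<in> set cs'"
    then have "c \<noteq> c'" using assms(3) cs by auto
    then show "sub ps c \<inter> sub ps c' = {}" using sub_disj assms(2) c' cs by auto
  qed
  have "good (\<lambda>S. Min (insert (ls!c + hh ps ws us S c) ((\<lambda>c. ls!c + hh ps ws us S c) ` set cs')))
      (sub ps c \<union> (\<Union>c\<in>set cs'. sub ps c)) K (mergeKids ls acc v K (childTab ls acc v c) cs')"
    using good_mergeKids[OF gc] assms dj cs by auto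
  then show ?thesis unfolding cs by simp
qed

lemma good_node:
  assumes v: "v < n"
    and acc: "\<forall>c. v<c \<and> c<n \<and> ps!c = v \<longrightarrow> good (\<lambda>S. hh ps ws us S c) (sub ps c) K (acc!(c-v-1))"
  shows "good (\<lambda>S. hh ps ws us S v) (sub ps v) K (node ps ws us K v acc)"
proof -
  let ?C = "{c. v < c \<and> c < n \<and> ps!c = v}"
  define cs where "cs = kids v ps 0"
  have scs: "set cs = ?C" unfolding cs_def by (rule kids_set)
  have e: "hh ps ws us S v = (if ?C = {} then 0 else Min ((\<lambda>c. (if v \<in> S then us!c else ws!c) + hh ps ws us S c) ` ?C))" for S
    by (rule hh.simps)
  show ?thesis
  proof (cases "cs = []")
    case True
    then have C0: "?C = {}" using scs by auto
    have h0: "hh ps ws us S v = 0" for S by (subst e) (rule if_P[OF C0])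
    have nd: "node ps ws us K v acc = replicate (Suc K) (0, [])" using True unfolding cs_def by (simp add: zeros_rep Let_def)
    show ?thesis unfolding nd good_def h0 using sub_fin by (auto simp del: replicate.simps)
  next
    case False
    have C1: "?C \<noteq> {}" using scs False by (metis set_empty)
    have h1: "hh ps ws us S v = Min ((\<lambda>c. (if v \<in> S then us!c else ws!c) + hh ps ws us S c) ` ?C)" for S
      by (subst e) (rule if_not_P[OF C1])
    have nd: "node ps ws us K v acc = cx (kidsTab ws acc v K cs) (kidsTab us acc v K cs) v"
      using False unfolding cs_def by (simp add: Let_def)
    have cprop: "\<forall>c\<in>set cs. v<c \<and> c<n \<and> ps!c = v" using scs by auto
    have dcs: "distinct cs" unfolding cs_def by (rule kids_distinct)
    have acc': "\<forall>c\<in>set cs. good (\<lambda>S. hh ps ws us S c) (sub ps c) K (acc!(c-v-1))" using acc scs by auto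
    note gw = good_kidsTab[OF False cprop dcs acc', of ws]
    note gu = good_kidsTab[OF False cprop dcs acc', of us]
    have vn: "v \<notin> (\<Union>c\<in>set cs. sub ps c)" using v_notin_sub_kid cprop by auto
    have D: "insert v (\<Union>c\<in>set cs. sub ps c) = sub ps v" using sub_split[OF v] scs by simp
    have "good (\<lambda>S. if v \<in> S then Min ((\<lambda>c. us!c + hh ps ws us S c) ` set cs) else Min ((\<lambda>c. ws!c + hh ps ws us S c) ` set cs))
       (sub ps v) K (node ps ws us K v acc)"
      using good_cx[OF gw gu vn] unfolding nd D .
    then show ?thesis by (rule good_cong) (simp add: h1 scs)
  qed
qed

definition invb :: "nat \<Rightarrow> nat \<Rightarrow> (real \<times> nat list) list list \<Rightarrow> bool" where
  "invb K v acc \<longleftrightarrow> length acc = n - v \<and> (\<forall>i<length acc. good (\<lambda>S. hh ps ws us S (v+i)) (sub ps (v+i)) K (acc!i))"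

lemma inv_step: "v < n \<Longrightarrow> invb K (Suc v) acc \<Longrightarrow> invb K v (node ps ws us K v acc # acc)"
proof -
  assume v: "v < n" and I: "invb K (Suc v) acc"
  have acc: "\<forall>c. v<c \<and> c<n \<and> ps!c = v \<longrightarrow> good (\<lambda>S. hh ps ws us S c) (sub ps c) K (acc!(c-v-1))"
  proof (intro allI impI)
    fix c assume c: "v<c \<and> c<n \<and> ps!c = v"
    then have "c - v - 1 < length acc" "Suc v + (c - v - 1) = c" using I unfolding invb_def by auto
    then show "good (\<lambda>S. hh ps ws us S c) (sub ps c) K (acc!(c-v-1))" using I unfolding invb_def by metis
  qed
  have g0: "good (\<lambda>S. hh ps ws us S v) (sub ps v) K (node ps ws us K v acc)" by (rule good_node[OF v acc])
  show ?thesis unfolding invb_def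
  proof (intro conjI allI impI)
    show "length (node ps ws us K v acc # acc) = n - v" using I v unfolding invb_def by simp
  next
    fix i assume i: "i < length (node ps ws us K v acc # acc)"
    show "good (\<lambda>S. hh ps ws us S (v + i)) (sub ps (v + i)) K ((node ps ws us K v acc # acc) ! i)"
    proof (cases i)
      case 0 then show ?thesis using g0 by simp
    next
      case (Suc j)
      then have "j < length acc" using i by simp
      then have "good (\<lambda>S. hh ps ws us S (Suc v + j)) (sub ps (Suc v + j)) K (acc!j)" using I unfolding invb_def by blast
      then show ?thesis using Suc by simp
    qed
  qed
qed

lemma inv_build: "v \<le> n \<Longrightarrow> invb K v acc \<Longrightarrow> invb K 0 (build ps ws us K v acc)"
proof (induction v arbitrary: acc)
  case 0 then show ?case by simp
next
  case (Suc v)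
  then have "invb K v (node ps ws us K v acc # acc)" using inv_step by simp
  then show ?case using Suc by simp
qed

lemma build_good: "good (\<lambda>S. hh ps ws us S 0) (sub ps 0) K (build ps ws us K n [] ! 0)"
proof -
  have "invb K n []" unfolding invb_def by simp
  then have "invb K 0 (build ps ws us K n [])" using inv_build by simp
  then have L: "length (build ps ws us K n []) = n"
    and G: "\<forall>i<length (build ps ws us K n []). good (\<lambda>S. hh ps ws us S (0+i)) (sub ps (0+i)) K (build ps ws us K n [] ! i)"
    unfolding invb_def diff_zero by blast+
  have "0 < length (build ps ws us K n [])" using L n_pos by linarith
  from G[rule_format, OF this] show ?thesis by (simp only: add_0)
qed

end

lemma mem_iff: "mem x l \<longleftrightarrow> x \<in> set l"
  by (induction l) auto

lemma wbList_len: "length ws = length xs \<Longrightarrow> length us = length xs \<Longrightarrow> length (wbList xs ws us S) = length xs"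
proof (induction xs arbitrary: ws us)
  case Nil then show ?case by simp
next
  case (Cons p xs)
  then obtain w ws' u us' where "ws = w # ws'" "us = u # us'" by (metis length_Suc_conv)
  then show ?case using Cons by simp
qed

lemma wbList_nth: "length ws = length xs \<Longrightarrow> length us = length xs \<Longrightarrow> i < length xs \<Longrightarrow>
  wbList xs ws us S ! i = (if mem (xs!i) S then us!i else ws!i)"
proof (induction xs arbitrary: ws us i)
  case Nil then show ?case by simp
next
  case (Cons p xs)
  then obtain w ws' u us' where e: "ws = w # ws'" "us = u # us'" by (metis length_Suc_conv)
  show ?case
  proof (cases i)
    case 0 then show ?thesis using e by simp
  next
    case (Suc j) then show ?thesis using e Cons by simp
  qed
qed

lemma T_kids_eq: "T_kids v xs i = length xs + 1"
  by (induction xs arbitrary: i) auto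

lemma T_zeros_eq: "T_zeros k = k + 1"
  by (induction k) auto

lemma T_shift_eq: "T_shift L xs = length xs + 1"
  by (induction L xs rule: T_shift.induct) auto

lemma T_bestk_le: "T_bestk xs ys p \<le> length xs + 1"
  by (induction xs ys p rule: T_bestk.induct) auto

lemma T_bestk0_le: "T_bestk0 xs ys \<le> length xs + 1"
proof (induction xs ys rule: T_bestk0.induct)
  case (1 g s1 gs c s2 cs)
  then show ?case using T_bestk_le[of gs cs "(min g c, s1, s2)"] by simp
qed auto

lemma T_cx2_le: "T_cx2 xs ys v \<le> length xs + 1"
  by (induction xs ys v rule: T_cx2.induct) auto

lemma T_cx_le: "T_cx xs ys v \<le> length xs + 1"
  by (cases xs) (auto intro: le_trans[OF T_cx2_le])

lemma T_mem_eq: "T_mem x S = length S + 1"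
  by (induction S) auto

lemma T_wbList_le: "T_wbList xs ws us S \<le> length xs * (length S + 2) + 1"
  by (induction xs ws us S rule: T_wbList.induct) (auto simp: T_mem_eq)

definition shape :: "nat \<Rightarrow> (real \<times> nat list) list \<Rightarrow> bool" where
  "shape K G \<longleftrightarrow> length G = Suc K \<and> (\<forall>k\<le>K. length (snd (G!k)) \<le> k)"

lemma good_shape: "good F D K G \<Longrightarrow> shape K G"
  unfolding good_def shape_def by blast

lemma shape_merge: "shape K G \<Longrightarrow> shape K C \<Longrightarrow> shape K (mergeFrom G C 0 (Suc K))"
proof -
  assume g: "shape K G" and c: "shape K C"
  have "length (snd (mergeFrom G C 0 (Suc K) ! k)) \<le> k" if k: "k \<le> K" for k
  proof -
    have kk: "k < Suc K" using k by simp
    have e: "mergeFrom G C 0 (Suc K) ! k = mergeAt G C k" using mergeFrom_nth[OF kk, of G C 0] by (simp only: add_0)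
    have kl: "k < length G" "k < length C" using g c k unfolding shape_def by auto
    obtain j where j: "j \<le> k" "snd (mergeAt G C k) = snd (G!(k-j)) @ snd (C!j)" using mergeAt_char[OF kl] by blast
    have "length (snd (G!(k-j))) \<le> k - j" "length (snd (C!j)) \<le> j" using g c k j unfolding shape_def by auto
    then show ?thesis unfolding e using j by simp
  qed
  then show ?thesis unfolding shape_def by (simp add: mergeFrom_len)
qed

lemma T_mergeAt_le: "shape K G \<Longrightarrow> length C = Suc K \<Longrightarrow> k \<le> K \<Longrightarrow> T_mergeAt G C k \<le> 4*K + 7"
proof -
  assume g: "shape K G" and c: "length C = Suc K" and k: "k \<le> K"
  have lg: "length G = Suc K" using g unfolding shape_def by simp
  have kl: "k < length G" "k < length C" using lg c k by auto
  have t1: "T_take (Suc k) G = k + 2" using lg k by (simp add: T_take)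
  have t2: "T_itrev (take (Suc k) G) [] = k + 2" using lg k by (simp add: T_itrev)
  have t3: "T_bestk0 (itrev (take (Suc k) G) []) C \<le> k + 2"
    using T_bestk0_le[of "itrev (take (Suc k) G) []" C] lg k by (simp add: itrev_Nil)
  define q where "q = bestk0 (itrev (take (Suc k) G) []) C"
  have ne: "itrev (take (Suc k) G) [] \<noteq> []" "C \<noteq> []" using kl by (auto simp: itrev_Nil)
  note ch = bestk0_char[OF ne, folded q_def, unfolded zipset[OF kl]]
  from ch obtain j where j: "j \<le> k" "q = bf (G!(k-j), C!j)" by auto
  have "k - j \<le> K" using k by simp
  then have "length (snd (G!(k-j))) \<le> k - j" using g unfolding shape_def by blast
  then have "length (fst (snd q)) \<le> K" using j k unfolding bf_def by simp
  moreover obtain m s1 s2 where qe: "q = (m, s1, s2)" by (cases q)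
  ultimately have t4: "T_fin q \<le> K + 1" by (simp add: T_append)
  show ?thesis using t1 t2 t3 t4 k unfolding T_mergeAt.simps q_def[symmetric] by linarith
qed

lemma T_mergeFrom_le: "(\<forall>i<r. T_mergeAt G C (k+i) \<le> M) \<Longrightarrow> T_mergeFrom G C k r \<le> r * (M+1) + 1"
proof (induction r arbitrary: k)
  case 0 then show ?case by simp
next
  case (Suc r)
  have a: "T_mergeAt G C k \<le> M" using Suc.prems[rule_format, of 0] by simp
  have "\<forall>i<r. T_mergeAt G C (Suc k + i) \<le> M"
  proof (intro allI impI)
    fix i assume "i < r"
    then have "Suc i < Suc r" by simp
    from Suc.prems[rule_format, OF this] show "T_mergeAt G C (Suc k + i) \<le> M" by simp
  qed
  then have "T_mergeFrom G C (Suc k) r \<le> r * (M+1) + 1" using Suc.IH by blast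
  then show ?case using a by simp
qed

lemma T_mergeFrom_K: "shape K G \<Longrightarrow> shape K C \<Longrightarrow> T_mergeFrom G C 0 (Suc K) \<le> (K+1)*(4*K+8) + 1"
proof -
  assume g: "shape K G" and c: "shape K C"
  have "\<forall>i<Suc K. T_mergeAt G C (0+i) \<le> 4*K+7"
    using T_mergeAt_le[OF g] c unfolding shape_def by auto
  from T_mergeFrom_le[OF this] have h: "T_mergeFrom G C 0 (Suc K) \<le> Suc K * (4*K+7+1) + 1" .
  have eq: "Suc K * (4*K+7+1) = (K+1)*(4*K+8)" by simp
  show ?thesis using h unfolding eq .
qed

lemma T_mergeKids_le:
  "shape K G \<Longrightarrow> (\<forall>c\<in>set cs. shape K (childTab ls acc v c) \<and> T_childTab ls acc v c \<le> X) \<Longrightarrow>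
   T_mergeKids ls acc v K G cs \<le> length cs * (X + (K+1)*(4*K+8) + 2) + 1"
proof (induction cs arbitrary: G)
  case Nil then show ?case by simp
next
  case (Cons c cs)
  have sc: "shape K (childTab ls acc v c)" and tc: "T_childTab ls acc v c \<le> X" using Cons.prems by auto
  have m: "T_mergeFrom G (childTab ls acc v c) 0 (Suc K) \<le> (K+1)*(4*K+8) + 1"
    using T_mergeFrom_K[OF Cons.prems(1) sc] .
  have sh: "shape K (mergeFrom G (childTab ls acc v c) 0 (Suc K))" using shape_merge[OF Cons.prems(1) sc] .
  have r: "T_mergeKids ls acc v K (mergeFrom G (childTab ls acc v c) 0 (Suc K)) cs \<le> length cs * (X + (K+1)*(4*K+8) + 2) + 1"
    using Cons.IH[OF sh] Cons.prems(2) by auto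
  define Y where "Y = (K+1)*(4*K+8)"
  define L where "L = length cs * (X + Y + 2)"
  have e: "T_mergeKids ls acc v K G (c # cs) = T_childTab ls acc v c + T_mergeFrom G (childTab ls acc v c) 0 (Suc K) +
     T_mergeKids ls acc v K (mergeFrom G (childTab ls acc v c) 0 (Suc K)) cs + 1" by (rule T_mergeKids.simps(2))
  have l: "length (c # cs) * (X + Y + 2) = X + Y + 2 + L" unfolding L_def by simp
  show ?case unfolding e Y_def[symmetric] l using tc m r unfolding Y_def[symmetric] L_def[symmetric] by linarith
qed

lemma T_kidsTab_le:
  "(\<forall>c\<in>set cs. shape K (childTab ls acc v c) \<and> T_childTab ls acc v c \<le> X) \<Longrightarrow>
   T_kidsTab ls acc v K cs \<le> length cs * (X + (K+1)*(4*K+8) + 2) + 1"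
proof (cases cs)
  case Nil then show ?thesis by simp
next
  case (Cons c cs')
  assume h: "\<forall>c\<in>set cs. shape K (childTab ls acc v c) \<and> T_childTab ls acc v c \<le> X"
  have "T_mergeKids ls acc v K (childTab ls acc v c) cs' \<le> length cs' * (X + (K+1)*(4*K+8) + 2) + 1"
    using T_mergeKids_le[of K "childTab ls acc v c" cs' ls acc v X] h Cons by auto
  moreover have "T_childTab ls acc v c \<le> X" using h Cons by auto
  ultimately have a: "T_childTab ls acc v c + T_mergeKids ls acc v K (childTab ls acc v c) cs' \<le> X + (length cs' * (X + (K+1)*(4*K+8) + 2) + 1)"
    by linarith
  define Z where "Z = X + (K+1)*(4*K+8) + 2"
  have e: "T_kidsTab ls acc v K cs = T_childTab ls acc v c + T_mergeKids ls acc v K (childTab ls acc v c) cs'"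
    unfolding Cons by (rule T_kidsTab.simps(2))
  have l: "length cs * Z = Z + length cs' * Z" unfolding Cons by simp
  have xz: "X \<le> Z" unfolding Z_def by simp
  show ?thesis unfolding e Z_def[symmetric] l using a xz unfolding Z_def[symmetric] by linarith
qed

lemma sum_kids_le: "(\<Sum>u<N. length (kids u xs i)) \<le> length xs"
proof (induction xs arbitrary: i)
  case Nil then show ?case by simp
next
  case (Cons p xs)
  have "(\<Sum>u<N. length (kids u (p # xs) i)) = (\<Sum>u<N. (if p = u \<and> i \<noteq> 0 then 1 else 0) + length (kids u xs (Suc i)))"
    by (intro sum.cong) auto
  also have "\<dots> = (\<Sum>u<N. (if p = u \<and> i \<noteq> 0 then 1 else 0)) + (\<Sum>u<N. length (kids u xs (Suc i)))"
    by (rule sum.distrib)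
  finally have "(\<Sum>u<N. length (kids u (p # xs) i)) = (\<Sum>u<N. (if p = u \<and> i \<noteq> 0 then 1 else 0)) + (\<Sum>u<N. length (kids u xs (Suc i)))" .
  moreover have "(\<Sum>u<N. (if p = u \<and> i \<noteq> 0 then 1 else 0::nat)) \<le> (\<Sum>u<N. (if p = u then 1 else 0))"
    by (intro sum_mono) auto
  moreover have "(\<Sum>u<N. (if p = u then 1 else 0::nat)) \<le> 1" by (simp add: sum.delta)
  ultimately show ?case using Cons.IH[of "Suc i"] by simp
qed

lemma arith_poly: "1 \<le> (n::nat) \<Longrightarrow> 8*n*n*n + 33*n*n + 34*n + 5 \<le> 80 * n^3"
proof -
  assume n: "1 \<le> n"
  have a: "n*n \<le> n*n*n" using n by simp
  have b: "n \<le> n*n" using n by simp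
  have c: "1 \<le> n" using n .
  have "n^3 = n*n*n" by (simp add: power3_eq_cube)
  then show ?thesis using a b c by linarith
qed

lemma arith_bound:
  assumes n: "1 \<le> (n::nat)" and K: "K \<le> n"
    and a: "a \<le> (n+1) + (n*(n+K+6) + 2*((2*n+K+2) + (K+1)*(4*K+8) + 2)*n + 1) + 1 + (K+1) + (n*(n+2)+1)"
  shows "a \<le> 80 * n^3"
proof -
  have m1: "n*(n+K+6) \<le> n*(n+n+6)" using K by simp
  have m2: "(K+1)*(4*K+8) \<le> (n+1)*(4*n+8)" using K by (intro mult_le_mono) auto
  have m3: "2*((2*n+K+2) + (K+1)*(4*K+8) + 2)*n \<le> 2*((2*n+n+2) + (n+1)*(4*n+8) + 2)*n"
    using K m2 by (intro mult_le_mono) auto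
  have "a \<le> (n+1) + (n*(n+n+6) + 2*((2*n+n+2) + (n+1)*(4*n+8) + 2)*n + 1) + 1 + (n+1) + (n*(n+2)+1)"
    using a m1 m3 K by linarith
  also have "\<dots> = 8*n*n*n + 33*n*n + 34*n + 5" by (simp add: algebra_simps)
  also have "\<dots> \<le> 80 * n^3" using arith_poly[OF n] .
  finally show ?thesis .
qed

context TI begin

lemma inv_acc: "v < n \<Longrightarrow> invb K (Suc v) acc \<Longrightarrow>
  (\<forall>c. v<c \<and> c<n \<and> ps!c = v \<longrightarrow> good (\<lambda>S. hh ps ws us S c) (sub ps c) K (acc!(c-v-1))) \<and> length acc = n - Suc v"
proof -
  assume v: "v < n" and I: "invb K (Suc v) acc"
  have "\<forall>c. v<c \<and> c<n \<and> ps!c = v \<longrightarrow> good (\<lambda>S. hh ps ws us S c) (sub ps c) K (acc!(c-v-1))"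
  proof (intro allI impI)
    fix c assume c: "v<c \<and> c<n \<and> ps!c = v"
    then have "c - v - 1 < length acc" "Suc v + (c - v - 1) = c" using I unfolding invb_def by auto
    then show "good (\<lambda>S. hh ps ws us S c) (sub ps c) K (acc!(c-v-1))" using I unfolding invb_def by metis
  qed
  then show ?thesis using I unfolding invb_def by blast
qed

lemma childTab_props:
  assumes v: "v < n" and I: "invb K (Suc v) acc" and c: "v<c \<and> c<n \<and> ps!c = v" and ls: "length ls = n"
  shows "shape K (childTab ls acc v c) \<and> T_childTab ls acc v c \<le> 2*n + K + 2"
proof -
  have g: "good (\<lambda>S. hh ps ws us S c) (sub ps c) K (acc!(c-v-1))" and la: "length acc = n - Suc v"
    using inv_acc[OF v I] c by auto
  have sh: "shape K (childTab ls acc v c)" using good_shape[OF good_shift[OF g]] by simp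
  have t1: "T_nth ls c = c + 1" using ls c by (simp add: T_nth)
  have i: "c - v - 1 < length acc" using la c by auto
  have t2: "T_nth acc (c - v - 1) = c - v - 1 + 1" using i by (simp add: T_nth)
  have t3: "T_shift (ls!c) (acc!(c-v-1)) = K + 2" using g unfolding good_def by (simp add: T_shift_eq)
  have "T_childTab ls acc v c = T_nth ls c + (T_nth acc (c - v - 1) + T_shift (ls!c) (acc!(c-v-1)))"
    by (rule T_childTab.simps)
  also have "\<dots> \<le> 2*n + K + 2" unfolding t1 t2 t3 using c by linarith
  finally show ?thesis using sh by simp
qed

definition Zb :: "nat \<Rightarrow> nat" where "Zb K = (2*n+K+2) + (K+1)*(4*K+8) + 2"

lemma T_node_le:
  assumes v: "v < n" and I: "invb K (Suc v) acc"
  shows "T_node ps ws us K v acc \<le> n + 1 + 2*(length (kids v ps 0) * Zb K + 1) + (K+2)"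
proof -
  define cs where "cs = kids v ps 0"
  have e: "T_node ps ws us K v acc = (n+1) + (if cs = [] then T_zeros (Suc K)
         else T_kidsTab ws acc v K cs + (T_kidsTab us acc v K cs + T_cx (kidsTab ws acc v K cs) (kidsTab us acc v K cs) v))"
    unfolding cs_def T_node.simps Let_def T_kids_eq by simp
  show ?thesis
  proof (cases "cs = []")
    case True
    then show ?thesis unfolding e cs_def[symmetric] by (simp add: T_zeros_eq)
  next
    case False
    have scs: "set cs = {c. v < c \<and> c < n \<and> ps!c = v}" unfolding cs_def by (rule kids_set)
    have cprop: "\<forall>c\<in>set cs. v<c \<and> c<n \<and> ps!c = v" using scs by auto
    have dcs: "distinct cs" unfolding cs_def by (rule kids_distinct)
    have acc': "\<forall>c\<in>set cs. good (\<lambda>S. hh ps ws us S c) (sub ps c) K (acc!(c-v-1))" using inv_acc[OF v I] cprop by auto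
    have lw: "length (kidsTab ws acc v K cs) = Suc K"
      using good_kidsTab[OF False cprop dcs acc', of ws] unfolding good_def by blast
    have tcx: "T_cx (kidsTab ws acc v K cs) (kidsTab us acc v K cs) v \<le> K + 2"
      using T_cx_le[of "kidsTab ws acc v K cs" "kidsTab us acc v K cs" v] lw by simp
    have hw: "\<forall>c\<in>set cs. shape K (childTab ws acc v c) \<and> T_childTab ws acc v c \<le> 2*n + K + 2"
      using childTab_props[OF v I] cprop len_ws by blast
    have hu: "\<forall>c\<in>set cs. shape K (childTab us acc v c) \<and> T_childTab us acc v c \<le> 2*n + K + 2"
      using childTab_props[OF v I] cprop len_us by blast
    have tw: "T_kidsTab ws acc v K cs \<le> length cs * Zb K + 1"
      using T_kidsTab_le[OF hw] unfolding Zb_def by simp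
    have tu: "T_kidsTab us acc v K cs \<le> length cs * Zb K + 1"
      using T_kidsTab_le[OF hu] unfolding Zb_def by simp
    show ?thesis unfolding e cs_def[symmetric] using False tw tu tcx by simp
  qed
qed

definition Bn :: "nat \<Rightarrow> nat \<Rightarrow> nat" where
  "Bn K u = n + 1 + 2*(length (kids u ps 0) * Zb K + 1) + (K+2)"

lemma T_build_le: "v \<le> n \<Longrightarrow> invb K v acc \<Longrightarrow> T_build ps ws us K v acc \<le> (\<Sum>u<v. Bn K u + 1) + 1"
proof (induction v arbitrary: acc)
  case 0 then show ?case by simp
next
  case (Suc v)
  have v: "v < n" using Suc.prems by simp
  have "invb K v (node ps ws us K v acc # acc)" using inv_step[OF v] Suc.prems by simp
  then have r: "T_build ps ws us K v (node ps ws us K v acc # acc) \<le> (\<Sum>u<v. Bn K u + 1) + 1" using Suc.IH v by simp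
  have t: "T_node ps ws us K v acc \<le> Bn K v" unfolding Bn_def using T_node_le[OF v Suc.prems(2)] .
  have e: "T_build ps ws us K (Suc v) acc = T_node ps ws us K v acc + T_build ps ws us K v (node ps ws us K v acc # acc) + 1"
    by (rule T_build.simps(2))
  show ?case unfolding e using r t by simp
qed

lemma sum_Bn: "(\<Sum>u<n. Bn K u + 1) \<le> n*(n+K+6) + 2 * Zb K * n"
proof -
  have "(\<Sum>u<n. Bn K u + 1) = (\<Sum>u<n. (n + K + 6) + (2 * Zb K) * length (kids u ps 0))"
    unfolding Bn_def by (intro sum.cong) (auto simp: algebra_simps)
  also have "\<dots> = n * (n+K+6) + (2 * Zb K) * (\<Sum>u<n. length (kids u ps 0))"
    by (simp add: sum.distrib sum_distrib_left)
  also have "\<dots> \<le> n * (n+K+6) + (2 * Zb K) * n"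
    using sum_kids_le[of ps 0 n] by simp
  finally show ?thesis by simp
qed

end

theorem mainTheorem1:
  "\<exists>C::nat. \<forall>(ps::nat list) (ws::real list) (us::real list) (K::nat).
     tree_input ps ws us \<longrightarrow>
       (case alg ps ws us K of (val, Sl, wb) \<Rightarrow>
          feasible ps K (set Sl)
        \<and> val = opt_value ps ws us K
        \<and> objective ps ws us (set Sl) = val
        \<and> length wb = length ps
        \<and> (\<forall>i. 0 < i \<and> i < length ps \<longrightarrow> wb ! i = wbar ps ws us (set Sl) (ps ! i, i)))
     \<and> T_alg ps ws us K \<le> C * length ps ^ 3"
proof (intro exI[of _ 80] allI impI)
  fix ps :: "nat list" and ws us :: "real list" and K :: nat
  assume ti: "tree_input ps ws us"
  interpret TI ps ws us by unfold_locales (rule ti)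
  define Kc where "Kc = min K n"
  define B where "B = build ps ws us Kc n []"
  have gB: "good (\<lambda>S. hh ps ws us S 0) (sub ps 0) Kc (B ! 0)" unfolding B_def by (rule build_good)
  have Kcn: "Kc \<le> n" "Kc \<le> K" unfolding Kc_def by auto
  obtain val Sl where ent: "B ! 0 ! Kc = (val, Sl)" by (cases "B ! 0 ! Kc")
  have fin: "finite (sub ps 0)" and lB: "length (B!0) = Suc Kc"
    and E: "set Sl \<subseteq> sub ps 0 \<and> length Sl \<le> Kc \<and> hh ps ws us (set Sl) 0 = val
      \<and> (\<forall>S\<subseteq>sub ps 0. card S \<le> Kc \<longrightarrow> hh ps ws us S 0 \<le> val)"
    using gB ent unfolding good_def by (metis fst_conv snd_conv order_refl)+
  have sub0: "sub ps 0 = tV ps" unfolding sub_def tV_def using desc_0 by auto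
  have algE: "alg ps ws us K = (val, Sl, wbList ps ws us Sl)"
    using ent unfolding B_def Kc_def by (simp add: Let_def)
  have feas: "feasible ps K (set Sl)"
  proof -
    have "card (set Sl) \<le> length Sl" by (rule card_length)
    then show ?thesis unfolding feasible_def using E sub0 Kcn by auto
  qed
  have obj: "objective ps ws us (set Sl) = val" using obj_hh E by simp
  have optv: "val = opt_value ps ws us K"
  proof -
    have finF: "finite {S. feasible ps K S}"
    proof -
      have "{S. feasible ps K S} \<subseteq> Pow (tV ps)" unfolding feasible_def by auto
      moreover have "finite (Pow (tV ps))" unfolding tV_def by simp
      ultimately show ?thesis using finite_subset by blast
    qed
    have ub: "objective ps ws us S \<le> val" if S: "feasible ps K S" for S
    proof -
      have Ss: "S \<subseteq> sub ps 0" using S sub0 unfolding feasible_def by auto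
      have "card S \<le> card (tV ps)" using S unfolding feasible_def tV_def by (intro card_mono) auto
      then have "card S \<le> n" unfolding tV_def by simp
      then have "card S \<le> Kc" using S unfolding feasible_def Kc_def by auto
      then show ?thesis using E Ss obj_hh by auto
    qed
    show ?thesis unfolding opt_value_def
      by (rule Max_eqI[symmetric]) (use finF ub feas obj in auto)
  qed
  have lwb: "length (wbList ps ws us Sl) = n" using wbList_len len_ws len_us by blast
  have wbi: "\<forall>i. 0 < i \<and> i < n \<longrightarrow> wbList ps ws us Sl ! i = wbar ps ws us (set Sl) (ps ! i, i)"
  proof (intro allI impI)
    fix i assume i: "0 < i \<and> i < n"
    have "wbList ps ws us Sl ! i = (if mem (ps!i) Sl then us!i else ws!i)"
      using wbList_nth len_ws len_us i by blast
    also have "\<dots> = wbar ps ws us (set Sl) (ps ! i, i)"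
      using wbar_edge[of i "set Sl"] i unfolding lenS_def mem_iff by simp
    finally show "wbList ps ws us Sl ! i = wbar ps ws us (set Sl) (ps ! i, i)" .
  qed
  have part1: "case alg ps ws us K of (val, Sl, wb) \<Rightarrow>
          feasible ps K (set Sl)
        \<and> val = opt_value ps ws us K
        \<and> objective ps ws us (set Sl) = val
        \<and> length wb = length ps
        \<and> (\<forall>i. 0 < i \<and> i < length ps \<longrightarrow> wb ! i = wbar ps ws us (set Sl) (ps ! i, i))"
    unfolding algE using feas optv obj lwb wbi by simp
  have invB: "invb Kc 0 B" unfolding B_def using inv_build[of n Kc "[]"] unfolding invb_def by simp
  have lenB: "length B = n" using invB unfolding invb_def by simp
  have tb: "T_build ps ws us Kc n [] \<le> n*(n+Kc+6) + 2 * Zb Kc * n + 1"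
  proof -
    have "invb Kc n []" unfolding invb_def by simp
    then have "T_build ps ws us Kc n [] \<le> (\<Sum>u<n. Bn Kc u + 1) + 1" using T_build_le by simp
    then show ?thesis using sum_Bn[of Kc] by linarith
  qed
  have "0 < length B" using lenB n_pos by linarith
  from T_nth[OF this] have tn1: "T_nth B 0 = 1" by simp
  have tn2: "T_nth (B ! 0) Kc = Kc + 1" using lB by (simp add: T_nth)
  have tout: "T_out ps ws us (B ! 0 ! Kc) \<le> n * (n + 2) + 1"
  proof -
    have "T_out ps ws us (B ! 0 ! Kc) = T_wbList ps ws us Sl" unfolding ent by simp
    also have "\<dots> \<le> n * (length Sl + 2) + 1" by (rule T_wbList_le)
    also have "\<dots> \<le> n * (n + 2) + 1" using E Kcn by simp
    finally show ?thesis .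
  qed
  have tal: "T_alg ps ws us K = (n + 1) + (T_build ps ws us Kc n [] + T_nth B 0 + T_nth (B ! 0) Kc + T_out ps ws us (B ! 0 ! Kc))"
    unfolding B_def Kc_def by (simp add: Let_def T_length)
  have "T_alg ps ws us K \<le> 80 * n^3"
  proof (rule arith_bound[OF n_pos Kcn(1)])
    show "T_alg ps ws us K \<le> (n+1) + (n*(n+Kc+6) + 2*((2*n+Kc+2) + (Kc+1)*(4*Kc+8) + 2)*n + 1) + 1 + (Kc+1) + (n*(n+2)+1)"
      unfolding tal tn1 tn2 using tb tout unfolding Zb_def by linarith
  qed
  then show "(case alg ps ws us K of (val, Sl, wb) \<Rightarrow>
          feasible ps K (set Sl)
        \<and> val = opt_value ps ws us K
        \<and> objective ps ws us (set Sl) = val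
        \<and> length wb = length ps
        \<and> (\<forall>i. 0 < i \<and> i < length ps \<longrightarrow> wb ! i = wbar ps ws us (set Sl) (ps ! i, i)))
     \<and> T_alg ps ws us K \<le> 80 * length ps ^ 3" using part1 by simp
qed


end
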